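(* Let $\Psi$ be a proof schema and $\gamma\in\mathbb N$. Then $\mathrm{PR}(\Psi\!\downarrow_\gamma)=\mathrm{PR}(\Psi)\!\downarrow_\gamma$.
   Context: **Language.** A two-sorted first-order language with sort $\omega$ (natural numbers) and sort $\iota$. It contains the constant function symbols $0:\omega$ and $s:\omega\to\omega$ (we write $t+1$ for $s(t)$; $\gamma\in\mathbb N$ also denotes the numeral $s^\gamma(0)$), further uninterpreted function and predicate symbols, and defined function and predicate symbols. Each defined function symbol $f$ comes with primitive recursive rewrite rules $f(0,\bar x)\to s$ and $f(s(y),\bar x)\to t[f(y,\bar x)]$, where $s,t$ do not contain $f$ and contain only defined symbols $g\prec f$ for a fixed irreflexive order $\prec$. Defined predicate symbols are analogous. $\mathcal E$ denotes these rules read as equations. **Calculi.** $\mathbf{LK}_{\mathcal E}$ is $\mathbf{LK}$ (axioms $A\vdash A$, $A$ atomic) plus the rule: from $S[t]$ infer $S[t']$ if $\mathcal E\models t=t'$. A proof link $(\varphi(a_1,\dots,a_m))$ above $S(a_1,\dots,a_m)$ (with $\varphi$ a proof symbol) is a $k$-proof link if $\mathrm{vars}(a_1)\subseteq\{k\}$. $\mathbf{LKS}_{\mathcal E}$ is $\mathbf{LK}_{\mathcal E}$ with proof links allowed as leaves. An $\mathbf{LKS}_{\mathcal E}$-proof is normal if it has no proof links and no defined symbols. **Proof schemata.** A proof schema pair for $\psi$ with sequent $S(n,\bar x)$ is a pair $(\pi,\nu(k))$ of $\mathbf{LKS}_{\mathcal E}$-proofs of $S(0,\bar x)$ and $S(k+1,\bar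 x)$, where $\pi$ has no proof links and $\nu(k)$ has only proof links $(\psi(k,\bar a))$ above $S(k,\bar a)$. A proof schema $\Psi=\langle(\pi_1,\nu_1(k)),\dots,(\pi_\alpha,\nu_\alpha(k))\rangle$ consists of pairs for $\psi_1,\dots,\psi_\alpha$, where the proofs of pair $\beta$ may additionally contain $k$-proof links to $\psi_\gamma$ for $\beta<\gamma$. The end-sequent of $\Psi$ is that of $\psi_1$. **Evaluation.** Proof links are rewritten by $(\psi_\beta(0,\bar x))\to\pi_\beta$ and $(\psi_\beta(k+1,\bar x))\to\nu_\beta(k)$. $\Psi\!\downarrow_\gamma$ is a normal form of the link $(\psi_1(\gamma,\bar x))$ under these rules plus the defined-symbol rules. **Configurations.** A configuration for an $\mathbf{LKS}_{\mathcal E}$-proof is a set $\Omega$ of formula occurrences of its end-sequent. End-sequent occurrences of $\pi_\beta$, $\nu_\beta(k)$ and of evaluations are identified. An $\Omega$-ancestor (resp. cut-ancestor) is an ancestor of an occurrence in $\Omega$ (resp. of a cut formula). **Projection terms.** Projection terms are built from sequents and terms $\mathrm{pr}^{\psi,\Omega}(a,\bar x)$ (one projection symbol for each proof symbol $\psi$ and configuration $\Omega$), using: - unary rule symbols $\rho$ (one per unary rule of $\mathbf{LKS}_{\mathcal E}$, with the choice of auxiliary formulas recorded); - unary symbols $w^{\Gamma\vdash\Delta}$ for sequents $\Gamma\vdash\Delta$; - binary $\oplus$; - binary $\otimes_\sigma$ for each binary rule $\sigma$. For an $\mathbf{LKS}_{\mathcal E}$-proof $\pi$ and configuration $\Omega$,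 define $\Xi_\rho(\pi,\Omega)$ over the inferences $\rho$ inductively: - axiom $S$: the term $S$; - proof link $(\psi(a,\bar x))$ above $S'$: $\mathrm{pr}^{\psi,\Omega'}(a,\bar x)$, where $\Omega'$ is the set of occurrences of $S'$ that are $\Omega$- or cut-ancestors; - unary $\rho$ with premise $\rho'$: $\Xi_{\rho'}$ if $\rho$ is the $\mathcal E$-rule or its auxiliary formulas are $\Omega$- or cut-ancestors, and otherwise $\rho(\Xi_{\rho'})$; - binary $\sigma$ with premises $\rho_1,\rho_2$: if the auxiliary formulas are $\Omega$- or cut-ancestors, $w^{\Gamma_2\vdash\Delta_2}(\Xi_{\rho_1})\oplus w^{\Gamma_1\vdash\Delta_1}(\Xi_{\rho_2})$, where $\Gamma_i\vdash\Delta_i$ is the subsequent of the conclusion of $\rho_i$ consisting of occurrences that are neither $\Omega$- nor cut-ancestors; otherwise $\Xi_{\rho_1}\otimes_\sigma\Xi_{\rho_2}$. $\Xi(\pi,\Omega)$ is the value at the last inference. **Schematic projection term.** The projection symbols have the rewrite rules $\mathrm{pr}^{\psi_\beta,\Omega}(0,\bar x)\to\Xi(\pi_\beta,\Omega)$ and $\mathrm{pr}^{\psi_\beta,\Omega}(k+1,\bar x)\to\Xi(\nu_\beta(k),\Omega)$. $\Xi(\Psi)\!\downarrow_\gamma$ is a normal form of $\mathrm{pr}^{\psi_1,\emptyset}(\gamma,\bar x)$ under these rules plus the defined-symbol rules. A projection term is normal if it has no projection symbols. **Evaluation of normal projection terms** to sets of normal proofs: - $|S|=\{S\}$ for an axiom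 $S$; - $|\rho(\Xi)|=\{\rho(\pi)\mid\pi\in|\Xi|\}$; - $|w^{\Gamma\vdash\Delta}(\Xi)|$ is the set of proofs in $|\Xi|$ followed by weakenings adding $\Gamma\vdash\Delta$; - $|\Xi_1\oplus\Xi_2|=|\Xi_1|\cup|\Xi_2|$; - $|\Xi_1\otimes_\sigma\Xi_2|=\{\sigma(\pi_1,\pi_2)\mid\pi_i\in|\Xi_i|\}$. Finally, $\mathrm{PR}(\pi)=|\Xi(\pi,\emptyset)|$ for normal $\pi$, and $\mathrm{PR}(\Psi)\!\downarrow_\gamma=|\Xi(\Psi)\!\downarrow_\gamma|$. *)

theory Defs
  imports Main
begin

section \<open>Two-sorted first-order language\<close>

datatype sort = Omega | Iota

text \<open>Free variables carry their sort. Bound variables are de Bruijn indices.\<close>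
type_synonym var = "nat \<times> sort"

text \<open>FU: uninterpreted function symbols, FD: defined function symbols;
      likewise for predicate symbols.\<close>
datatype fsym = FU nat | FD nat
datatype psym = PU nat | PD nat
datatype dsym = DF nat | DP nat

datatype trm = Bd nat | Fr var | Zero | Sc trm | Fn fsym "trm list"
datatype fm = Atom psym "trm list" | Neg fm | Conj fm fm | Disj fm fm | Imp fm fm
  | All sort fm | Ex sort fm

type_synonym sequent = "fm list \<times> fm list"

definition num_t :: "nat \<Rightarrow> trm" where
  "num_t n = (Sc ^^ n) Zero"

text \<open>Templates: the recursion variable y is (0,Omega), the parameters are
  xvars ss = (1,ss!0), (2,ss!1), ...  The base template of f is s (for f(0,x)),
  the step template is t[f(y,x)] (for f(s(y),x)), given literally with the
  occurrences of f(y,x).\<close>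
record lang =
  fsig :: "fsym \<Rightarrow> sort list \<times> sort"
  psig :: "psym \<Rightarrow> sort list"
  fbase :: "nat \<Rightarrow> trm"
  fstepr :: "nat \<Rightarrow> trm"
  pbase :: "nat \<Rightarrow> fm"
  pstepr :: "nat \<Rightarrow> fm"
  dord :: "dsym rel"

definition yvar :: var where "yvar = (0, Omega)"
definition xvars :: "sort list \<Rightarrow> var list" where
  "xvars ss = map (\<lambda>j. (Suc j, ss ! j)) [0..<length ss]"

primrec lift_t :: "nat \<Rightarrow> trm \<Rightarrow> trm" where
  "lift_t d (Bd i) = (if i < d then Bd i else Bd (Suc i))"
| "lift_t d (Fr v) = Fr v"
| "lift_t d Zero = Zero"
| "lift_t d (Sc u) = Sc (lift_t d u)"
| "lift_t d (Fn g us) = Fn g (map (lift_t d) us)"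

primrec inst_t :: "nat \<Rightarrow> trm \<Rightarrow> trm \<Rightarrow> trm" where
  "inst_t d t (Bd i) = (if i < d then Bd i else if i = d then t else Bd (i - 1))"
| "inst_t d t (Fr v) = Fr v"
| "inst_t d t Zero = Zero"
| "inst_t d t (Sc u) = Sc (inst_t d t u)"
| "inst_t d t (Fn g us) = Fn g (map (inst_t d t) us)"

primrec inst_f :: "nat \<Rightarrow> trm \<Rightarrow> fm \<Rightarrow> fm" where
  "inst_f d t (Atom P us) = Atom P (map (inst_t d t) us)"
| "inst_f d t (Neg A) = Neg (inst_f d t A)"
| "inst_f d t (Conj A B) = Conj (inst_f d t A) (inst_f d t B)"
| "inst_f d t (Disj A B) = Disj (inst_f d t A) (inst_f d t B)"
| "inst_f d t (Imp A B) = Imp (inst_f d t A) (inst_f d t B)"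
| "inst_f d t (All s A) = All s (inst_f (Suc d) (lift_t 0 t) A)"
| "inst_f d t (Ex s A) = Ex s (inst_f (Suc d) (lift_t 0 t) A)"

primrec subst_t :: "(var \<Rightarrow> trm) \<Rightarrow> trm \<Rightarrow> trm" where
  "subst_t \<sigma> (Bd i) = Bd i"
| "subst_t \<sigma> (Fr v) = \<sigma> v"
| "subst_t \<sigma> Zero = Zero"
| "subst_t \<sigma> (Sc u) = Sc (subst_t \<sigma> u)"
| "subst_t \<sigma> (Fn g us) = Fn g (map (subst_t \<sigma>) us)"

primrec subst_f :: "(var \<Rightarrow> trm) \<Rightarrow> fm \<Rightarrow> fm" where
  "subst_f \<sigma> (Atom P us) = Atom P (map (subst_t \<sigma>) us)"
| "subst_f \<sigma> (Neg A) = Neg (subst_f \<sigma> A)"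
| "subst_f \<sigma> (Conj A B) = Conj (subst_f \<sigma> A) (subst_f \<sigma> B)"
| "subst_f \<sigma> (Disj A B) = Disj (subst_f \<sigma> A) (subst_f \<sigma> B)"
| "subst_f \<sigma> (Imp A B) = Imp (subst_f \<sigma> A) (subst_f \<sigma> B)"
| "subst_f \<sigma> (All s A) = All s (subst_f (lift_t 0 \<circ> \<sigma>) A)"
| "subst_f \<sigma> (Ex s A) = Ex s (subst_f (lift_t 0 \<circ> \<sigma>) A)"

definition subst_seq :: "(var \<Rightarrow> trm) \<Rightarrow> sequent \<Rightarrow> sequent" where
  "subst_seq \<sigma> S = (map (subst_f \<sigma>) (fst S), map (subst_f \<sigma>) (snd S))"

definition mk_subst :: "var list \<Rightarrow> trm list \<Rightarrow> var \<Rightarrow> trm" where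
  "mk_subst vs ts v = (case map_of (zip vs ts) v of Some t \<Rightarrow> t | None \<Rightarrow> Fr v)"

primrec fv_t :: "trm \<Rightarrow> var set" where
  "fv_t (Bd i) = {}"
| "fv_t (Fr v) = {v}"
| "fv_t Zero = {}"
| "fv_t (Sc u) = fv_t u"
| "fv_t (Fn g us) = \<Union>(set (map fv_t us))"

primrec fv_f :: "fm \<Rightarrow> var set" where
  "fv_f (Atom P us) = \<Union>(set (map fv_t us))"
| "fv_f (Neg A) = fv_f A"
| "fv_f (Conj A B) = fv_f A \<union> fv_f B"
| "fv_f (Disj A B) = fv_f A \<union> fv_f B"
| "fv_f (Imp A B) = fv_f A \<union> fv_f B"
| "fv_f (All s A) = fv_f A"
| "fv_f (Ex s A) = fv_f A"

definition fv_seq :: "sequent \<Rightarrow> var set" where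
  "fv_seq S = (\<Union>A\<in>set (fst S) \<union> set (snd S). fv_f A)"

primrec dsyms_t :: "trm \<Rightarrow> dsym set" where
  "dsyms_t (Bd i) = {}"
| "dsyms_t (Fr v) = {}"
| "dsyms_t Zero = {}"
| "dsyms_t (Sc u) = dsyms_t u"
| "dsyms_t (Fn g us) = (case g of FD f \<Rightarrow> {DF f} | FU f \<Rightarrow> {}) \<union> \<Union>(set (map dsyms_t us))"

primrec dsyms_f :: "fm \<Rightarrow> dsym set" where
  "dsyms_f (Atom P us) = (case P of PD p \<Rightarrow> {DP p} | PU p \<Rightarrow> {}) \<union> \<Union>(set (map dsyms_t us))"
| "dsyms_f (Neg A) = dsyms_f A"
| "dsyms_f (Conj A B) = dsyms_f A \<union> dsyms_f B"
| "dsyms_f (Disj A B) = dsyms_f A \<union> dsyms_f B"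
| "dsyms_f (Imp A B) = dsyms_f A \<union> dsyms_f B"
| "dsyms_f (All s A) = dsyms_f A"
| "dsyms_f (Ex s A) = dsyms_f A"

definition dsyms_seq :: "sequent \<Rightarrow> dsym set" where
  "dsyms_seq S = (\<Union>A\<in>set (fst S) \<union> set (snd S). dsyms_f A)"

primrec fapps_t :: "nat \<Rightarrow> trm \<Rightarrow> trm list set" where
  "fapps_t f (Bd i) = {}"
| "fapps_t f (Fr v) = {}"
| "fapps_t f Zero = {}"
| "fapps_t f (Sc u) = fapps_t f u"
| "fapps_t f (Fn g us) = (if g = FD f then {us} else {}) \<union> \<Union>(set (map (fapps_t f) us))"

primrec papps_f :: "nat \<Rightarrow> fm \<Rightarrow> trm list set" where
  "papps_f p (Atom P us) = (if P = PD p then {us} else {})"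
| "papps_f p (Neg A) = papps_f p A"
| "papps_f p (Conj A B) = papps_f p A \<union> papps_f p B"
| "papps_f p (Disj A B) = papps_f p A \<union> papps_f p B"
| "papps_f p (Imp A B) = papps_f p A \<union> papps_f p B"
| "papps_f p (All s A) = papps_f p A"
| "papps_f p (Ex s A) = papps_f p A"

text \<open>Sorting (env = sorts of the de Bruijn-bound variables).\<close>
primrec sort_of :: "lang \<Rightarrow> sort list \<Rightarrow> trm \<Rightarrow> sort option" where
  "sort_of L env (Bd i) = (if i < length env then Some (env ! i) else None)"
| "sort_of L env (Fr v) = Some (snd v)"
| "sort_of L env Zero = Some Omega"
| "sort_of L env (Sc u) = (if sort_of L env u = Some Omega then Some Omega else None)"
| "sort_of L env (Fn g us) =
     (if map (sort_of L env) us = map Some (fst (fsig L g)) then Some (snd (fsig L g)) else None)"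

primrec wf_f :: "lang \<Rightarrow> sort list \<Rightarrow> fm \<Rightarrow> bool" where
  "wf_f L env (Atom P us) = (map (sort_of L env) us = map Some (psig L P))"
| "wf_f L env (Neg A) = wf_f L env A"
| "wf_f L env (Conj A B) = (wf_f L env A \<and> wf_f L env B)"
| "wf_f L env (Disj A B) = (wf_f L env A \<and> wf_f L env B)"
| "wf_f L env (Imp A B) = (wf_f L env A \<and> wf_f L env B)"
| "wf_f L env (All s A) = wf_f L (s # env) A"
| "wf_f L env (Ex s A) = wf_f L (s # env) A"

definition wf_seq :: "lang \<Rightarrow> sequent \<Rightarrow> bool" where
  "wf_seq L S = (\<forall>A\<in>set (fst S) \<union> set (snd S). wf_f L [] A)"

text \<open>Conditions on the defined symbols: primitive recursive rules whose right-hand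
  sides only use defined symbols g \<prec> f (\<prec> a fixed irreflexive order), apart from the
  recursive occurrence f(y,x) in the step rule.\<close>
definition wf_lang :: "lang \<Rightarrow> bool" where
  "wf_lang L \<longleftrightarrow> irrefl (dord L) \<and> trans (dord L) \<and>
    (\<forall>f. \<exists>ss r. fsig L (FD f) = (Omega # ss, r) \<and>
       sort_of L [] (fbase L f) = Some r \<and> fv_t (fbase L f) \<subseteq> set (xvars ss) \<and>
       (\<forall>g\<in>dsyms_t (fbase L f). (g, DF f) \<in> dord L) \<and>
       sort_of L [] (fstepr L f) = Some r \<and> fv_t (fstepr L f) \<subseteq> set (yvar # xvars ss) \<and>
       (\<forall>g\<in>dsyms_t (fstepr L f). g = DF f \<or> (g, DF f) \<in> dord L) \<and>
       (\<forall>us\<in>fapps_t f (fstepr L f). us = map Fr (yvar # xvars ss))) \<and>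
    (\<forall>p. \<exists>ss. psig L (PD p) = Omega # ss \<and>
       wf_f L [] (pbase L p) \<and> fv_f (pbase L p) \<subseteq> set (xvars ss) \<and>
       (\<forall>g\<in>dsyms_f (pbase L p). (g, DP p) \<in> dord L) \<and>
       wf_f L [] (pstepr L p) \<and> fv_f (pstepr L p) \<subseteq> set (yvar # xvars ss) \<and>
       (\<forall>g\<in>dsyms_f (pstepr L p). g = DP p \<or> (g, DP p) \<in> dord L) \<and>
       (\<forall>us\<in>papps_f p (pstepr L p). us = map Fr (yvar # xvars ss)))"

definition lstep :: "('a \<Rightarrow> 'a \<Rightarrow> bool) \<Rightarrow> 'a list \<Rightarrow> 'a list \<Rightarrow> bool" where
  "lstep R xs ys \<longleftrightarrow> (\<exists>as b b' cs. xs = as @ b # cs \<and> ys = as @ b' # cs \<and> R b b')"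

inductive tstep :: "lang \<Rightarrow> trm \<Rightarrow> trm \<Rightarrow> bool" for L where
  base: "fsig L (FD f) = (Omega # ss, r) \<Longrightarrow> length us = length ss \<Longrightarrow>
    tstep L (Fn (FD f) (Zero # us)) (subst_t (mk_subst (xvars ss) us) (fbase L f))"
| rec: "fsig L (FD f) = (Omega # ss, r) \<Longrightarrow> length us = length ss \<Longrightarrow>
    tstep L (Fn (FD f) (Sc u # us)) (subst_t (mk_subst (yvar # xvars ss) (u # us)) (fstepr L f))"
| sc: "tstep L u u' \<Longrightarrow> tstep L (Sc u) (Sc u')"
| fn: "tstep L u u' \<Longrightarrow> tstep L (Fn g (xs @ u # ys)) (Fn g (xs @ u' # ys))"

inductive fstep :: "lang \<Rightarrow> fm \<Rightarrow> fm \<Rightarrow> bool" for L where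
  arg: "lstep (tstep L) us us' \<Longrightarrow> fstep L (Atom P us) (Atom P us')"
| base: "psig L (PD p) = Omega # ss \<Longrightarrow> length us = length ss \<Longrightarrow>
    fstep L (Atom (PD p) (Zero # us)) (subst_f (mk_subst (xvars ss) us) (pbase L p))"
| rec: "psig L (PD p) = Omega # ss \<Longrightarrow> length us = length ss \<Longrightarrow>
    fstep L (Atom (PD p) (Sc u # us)) (subst_f (mk_subst (yvar # xvars ss) (u # us)) (pstepr L p))"
| neg: "fstep L A A' \<Longrightarrow> fstep L (Neg A) (Neg A')"
| conj1: "fstep L A A' \<Longrightarrow> fstep L (Conj A B) (Conj A' B)"
| conj2: "fstep L B B' \<Longrightarrow> fstep L (Conj A B) (Conj A B')"
| disj1: "fstep L A A' \<Longrightarrow> fstep L (Disj A B) (Disj A' B)"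
| disj2: "fstep L B B' \<Longrightarrow> fstep L (Disj A B) (Disj A B')"
| imp1: "fstep L A A' \<Longrightarrow> fstep L (Imp A B) (Imp A' B)"
| imp2: "fstep L B B' \<Longrightarrow> fstep L (Imp A B) (Imp A B')"
| all: "fstep L A A' \<Longrightarrow> fstep L (All s A) (All s A')"
| ex: "fstep L A A' \<Longrightarrow> fstep L (Ex s A) (Ex s A')"

definition seq_step :: "lang \<Rightarrow> sequent \<Rightarrow> sequent \<Rightarrow> bool" where
  "seq_step L S S' \<longleftrightarrow>
     (lstep (fstep L) (fst S) (fst S') \<and> snd S = snd S') \<or>
     (fst S = fst S' \<and> lstep (fstep L) (snd S) (snd S'))"

text \<open>E |= t = t': equational consequence of the rules read as equations
  (by Birkhoff's theorem: convertibility).\<close>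
definition E_eq :: "lang \<Rightarrow> trm \<Rightarrow> trm \<Rightarrow> bool" where
  "E_eq L = (\<lambda>a b. tstep L a b \<or> tstep L b a)\<^sup>*\<^sup>*"

inductive trm_repl :: "trm \<Rightarrow> trm \<Rightarrow> trm \<Rightarrow> trm \<Rightarrow> bool" for t t' where
  refl: "trm_repl t t' u u"
| here: "trm_repl t t' t t'"
| sc: "trm_repl t t' u u' \<Longrightarrow> trm_repl t t' (Sc u) (Sc u')"
| fn: "list_all2 (trm_repl t t') us us' \<Longrightarrow> trm_repl t t' (Fn g us) (Fn g us')"

fun fm_repl :: "trm \<Rightarrow> trm \<Rightarrow> fm \<Rightarrow> fm \<Rightarrow> bool" where
  "fm_repl t t' (Atom P us) (Atom Q vs) = (P = Q \<and> list_all2 (trm_repl t t') us vs)"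
| "fm_repl t t' (Neg A) (Neg A') = fm_repl t t' A A'"
| "fm_repl t t' (Conj A B) (Conj A' B') = (fm_repl t t' A A' \<and> fm_repl t t' B B')"
| "fm_repl t t' (Disj A B) (Disj A' B') = (fm_repl t t' A A' \<and> fm_repl t t' B B')"
| "fm_repl t t' (Imp A B) (Imp A' B') = (fm_repl t t' A A' \<and> fm_repl t t' B B')"
| "fm_repl t t' (All s A) (All s' A') = (s = s' \<and> fm_repl t t' A A')"
| "fm_repl t t' (Ex s A) (Ex s' A') = (s = s' \<and> fm_repl t t' A A')"
| "fm_repl t t' _ _ = False"

definition seq_repl :: "trm \<Rightarrow> trm \<Rightarrow> sequent \<Rightarrow> sequent \<Rightarrow> bool" where
  "seq_repl t t' S S' \<longleftrightarrow>
     list_all2 (fm_repl t t') (fst S) (fst S') \<and> list_all2 (fm_repl t t') (snd S) (snd S')"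

section \<open>LKS_E proofs\<close>

datatype rkind = WeakL | WeakR | ContrL | ContrR | NegL | NegR | AndL | OrR | ImpR
  | AllL | AllR | ExL | ExR | AndR | OrL | ImpL | Cut

text \<open>Unary inference: kind, positions of the auxiliary occurrences in the antecedent and
  succedent of the premise, and the main formula. The conclusion is the main formula
  followed by the context (premise without auxiliary occurrences).
  Binary inference: kind, position of the auxiliary occurrence in premise 1 and in
  premise 2, and the main (resp. cut) formula.\<close>
datatype urule = URule rkind "nat list" "nat list" fm
datatype brule = BRule rkind nat nat fm

text \<open>Proof symbols \<psi>_1,...,\<psi>_\<alpha> are represented by the indices 0,...,\<alpha>-1.
  Link b a as S is the lkproof link (\<psi>_(b+1)(a, as)) above S.\<close>
datatype lkproof = Ax fm | Link nat trm "trm list" sequent | Unary urule lkproof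
  | Binary brule lkproof lkproof | ERule sequent lkproof

definition main_left :: "rkind \<Rightarrow> bool" where
  "main_left k \<longleftrightarrow> k \<in> {WeakL, ContrL, NegL, AndL, AllL, ExL, OrL, ImpL}"
definition a1_left :: "rkind \<Rightarrow> bool" where "a1_left k \<longleftrightarrow> k = OrL"
definition a2_left :: "rkind \<Rightarrow> bool" where "a2_left k \<longleftrightarrow> k \<in> {OrL, ImpL, Cut}"

definition ctx :: "fm list \<Rightarrow> nat list \<Rightarrow> fm list" where
  "ctx xs is = nths xs (- set is)"

fun ucon :: "urule \<Rightarrow> sequent \<Rightarrow> sequent" where
  "ucon (URule k ls rs m) (G, D) =
     ((if main_left k then [m] else []) @ ctx G ls, (if main_left k then [] else [m]) @ ctx D rs)"

fun bcon :: "brule \<Rightarrow> sequent \<Rightarrow> sequent \<Rightarrow> sequent" where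
  "bcon (BRule k i j m) (G1, D1) (G2, D2) =
     (let G1' = (if a1_left k then ctx G1 [i] else G1); D1' = (if a1_left k then D1 else ctx D1 [i]);
          G2' = (if a2_left k then ctx G2 [j] else G2); D2' = (if a2_left k then D2 else ctx D2 [j]);
          mm = (if k = Cut then [] else [m])
      in ((if main_left k then mm else []) @ G1' @ G2', (if main_left k then [] else mm) @ D1' @ D2'))"

fun concl :: "lkproof \<Rightarrow> sequent" where
  "concl (Ax A) = ([A], [A])"
| "concl (Link b a as S) = S"
| "concl (Unary r p) = ucon r (concl p)"
| "concl (Binary r p q) = bcon r (concl p) (concl q)"
| "concl (ERule S p) = S"

fun urule_ok :: "lang \<Rightarrow> urule \<Rightarrow> sequent \<Rightarrow> bool" where
  "urule_ok L (URule k ls rs m) (G, D) =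
    (wf_f L [] m \<and> distinct ls \<and> distinct rs \<and> (\<forall>i\<in>set ls. i < length G) \<and> (\<forall>i\<in>set rs. i < length D) \<and>
     (case k of
       WeakL \<Rightarrow> ls = [] \<and> rs = []
     | WeakR \<Rightarrow> ls = [] \<and> rs = []
     | ContrL \<Rightarrow> rs = [] \<and> (\<exists>i j. ls = [i, j] \<and> G ! i = m \<and> G ! j = m)
     | ContrR \<Rightarrow> ls = [] \<and> (\<exists>i j. rs = [i, j] \<and> D ! i = m \<and> D ! j = m)
     | NegL \<Rightarrow> ls = [] \<and> (\<exists>i. rs = [i] \<and> m = Neg (D ! i))
     | NegR \<Rightarrow> rs = [] \<and> (\<exists>i. ls = [i] \<and> m = Neg (G ! i))
     | AndL \<Rightarrow> rs = [] \<and> (\<exists>i A B. ls = [i] \<and> m = Conj A B \<and> (G ! i = A \<or> G ! i = B))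
     | OrR \<Rightarrow> ls = [] \<and> (\<exists>i A B. rs = [i] \<and> m = Disj A B \<and> (D ! i = A \<or> D ! i = B))
     | ImpR \<Rightarrow> (\<exists>i j. ls = [i] \<and> rs = [j] \<and> m = Imp (G ! i) (D ! j))
     | AllL \<Rightarrow> rs = [] \<and> (\<exists>i s F t. ls = [i] \<and> m = All s F \<and> sort_of L [] t = Some s \<and> G ! i = inst_f 0 t F)
     | AllR \<Rightarrow> ls = [] \<and> (\<exists>i s F v. rs = [i] \<and> m = All s F \<and> snd v = s \<and> D ! i = inst_f 0 (Fr v) F \<and>
                 v \<notin> fv_seq (ucon (URule k ls rs m) (G, D)))
     | ExL \<Rightarrow> rs = [] \<and> (\<exists>i s F v. ls = [i] \<and> m = Ex s F \<and> snd v = s \<and> G ! i = inst_f 0 (Fr v) F \<and>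
                 v \<notin> fv_seq (ucon (URule k ls rs m) (G, D)))
     | ExR \<Rightarrow> ls = [] \<and> (\<exists>i s F t. rs = [i] \<and> m = Ex s F \<and> sort_of L [] t = Some s \<and> D ! i = inst_f 0 t F)
     | _ \<Rightarrow> False))"

fun brule_ok :: "lang \<Rightarrow> brule \<Rightarrow> sequent \<Rightarrow> sequent \<Rightarrow> bool" where
  "brule_ok L (BRule k i j m) (G1, D1) (G2, D2) =
    (wf_f L [] m \<and> i < length (if a1_left k then G1 else D1) \<and> j < length (if a2_left k then G2 else D2) \<and>
     (case k of
       AndR \<Rightarrow> m = Conj (D1 ! i) (D2 ! j)
     | OrL \<Rightarrow> m = Disj (G1 ! i) (G2 ! j)
     | ImpL \<Rightarrow> m = Imp (D1 ! i) (G2 ! j)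
     | Cut \<Rightarrow> D1 ! i = m \<and> G2 ! j = m
     | _ \<Rightarrow> False))"

definition is_atom :: "fm \<Rightarrow> bool" where
  "is_atom A \<longleftrightarrow> (\<exists>P us. A = Atom P us)"

section \<open>Proof schemata\<close>

text \<open>Component for \<psi>_\<beta>: sequent S(n, xs), the variables n, xs, k, and the pair (\<pi>, \<nu>(k)).\<close>
record comp =
  cseq :: sequent
  cn :: var
  cxs :: "var list"
  ck :: var
  cpi :: lkproof
  cnu :: lkproof

type_synonym schema = "comp list"

definition link_ok :: "lang \<Rightarrow> schema \<Rightarrow> nat \<Rightarrow> trm \<Rightarrow> trm list \<Rightarrow> sequent \<Rightarrow> bool" where
  "link_ok L \<Psi> b a as S \<longleftrightarrow> b < length \<Psi> \<and> sort_of L [] a = Some Omega \<and>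
     map (sort_of L []) as = map (Some \<circ> snd) (cxs (\<Psi> ! b)) \<and>
     S = subst_seq (mk_subst (cn (\<Psi> ! b) # cxs (\<Psi> ! b)) (a # as)) (cseq (\<Psi> ! b))"

text \<open>LKS_E proofs; "ok b a" says which lkproof links (\<psi>_b(a, ...)) are admitted.\<close>
fun valid :: "lang \<Rightarrow> schema \<Rightarrow> (nat \<Rightarrow> trm \<Rightarrow> bool) \<Rightarrow> lkproof \<Rightarrow> bool" where
  "valid L \<Psi> ok (Ax A) = (is_atom A \<and> wf_f L [] A)"
| "valid L \<Psi> ok (Link b a as S) = (ok b a \<and> link_ok L \<Psi> b a as S)"
| "valid L \<Psi> ok (Unary r p) = (valid L \<Psi> ok p \<and> urule_ok L r (concl p))"
| "valid L \<Psi> ok (Binary r p q) = (valid L \<Psi> ok p \<and> valid L \<Psi> ok q \<and> brule_ok L r (concl p) (concl q))"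
| "valid L \<Psi> ok (ERule S p) =
     (valid L \<Psi> ok p \<and> wf_seq L S \<and> (\<exists>t t'. E_eq L t t' \<and> seq_repl t t' (concl p) S))"

definition comp_ok :: "lang \<Rightarrow> schema \<Rightarrow> nat \<Rightarrow> comp \<Rightarrow> bool" where
  "comp_ok L \<Psi> \<beta> c \<longleftrightarrow>
     snd (cn c) = Omega \<and> snd (ck c) = Omega \<and> distinct (cn c # cxs c) \<and> ck c \<notin> set (cxs c) \<and>
     wf_seq L (cseq c) \<and> fv_seq (cseq c) \<subseteq> set (cn c # cxs c) \<and>
     valid L \<Psi> (\<lambda>\<gamma> a. \<beta> < \<gamma> \<and> fv_t a \<subseteq> {ck c}) (cpi c) \<and>
     concl (cpi c) = subst_seq (mk_subst [cn c] [Zero]) (cseq c) \<and>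
     valid L \<Psi> (\<lambda>\<gamma> a. (\<beta> < \<gamma> \<and> fv_t a \<subseteq> {ck c}) \<or> (\<gamma> = \<beta> \<and> a = Fr (ck c))) (cnu c) \<and>
     concl (cnu c) = subst_seq (mk_subst [cn c] [Sc (Fr (ck c))]) (cseq c)"

definition is_schema :: "lang \<Rightarrow> schema \<Rightarrow> bool" where
  "is_schema L \<Psi> \<longleftrightarrow> wf_lang L \<and> \<Psi> \<noteq> [] \<and> (\<forall>\<beta><length \<Psi>. comp_ok L \<Psi> \<beta> (\<Psi> ! \<beta>))"

section \<open>Evaluation of lkproof schemata\<close>

definition subst_ur :: "(var \<Rightarrow> trm) \<Rightarrow> urule \<Rightarrow> urule" where
  "subst_ur \<sigma> r = (case r of URule k ls rs m \<Rightarrow> URule k ls rs (subst_f \<sigma> m))"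
definition subst_br :: "(var \<Rightarrow> trm) \<Rightarrow> brule \<Rightarrow> brule" where
  "subst_br \<sigma> r = (case r of BRule k i j m \<Rightarrow> BRule k i j (subst_f \<sigma> m))"

primrec subst_p :: "(var \<Rightarrow> trm) \<Rightarrow> lkproof \<Rightarrow> lkproof" where
  "subst_p \<sigma> (Ax A) = Ax (subst_f \<sigma> A)"
| "subst_p \<sigma> (Link b a as S) = Link b (subst_t \<sigma> a) (map (subst_t \<sigma>) as) (subst_seq \<sigma> S)"
| "subst_p \<sigma> (Unary r p) = Unary (subst_ur \<sigma> r) (subst_p \<sigma> p)"
| "subst_p \<sigma> (Binary r p q) = Binary (subst_br \<sigma> r) (subst_p \<sigma> p) (subst_p \<sigma> q)"
| "subst_p \<sigma> (ERule S p) = ERule (subst_seq \<sigma> S) (subst_p \<sigma> p)"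

inductive pstep :: "lang \<Rightarrow> schema \<Rightarrow> lkproof \<Rightarrow> lkproof \<Rightarrow> bool" for L \<Psi> where
  ax: "fstep L A A' \<Longrightarrow> pstep L \<Psi> (Ax A) (Ax A')"
| link_a: "tstep L a a' \<Longrightarrow> pstep L \<Psi> (Link b a as S) (Link b a' as S)"
| link_as: "lstep (tstep L) as as' \<Longrightarrow> pstep L \<Psi> (Link b a as S) (Link b a as' S)"
| link_S: "seq_step L S S' \<Longrightarrow> pstep L \<Psi> (Link b a as S) (Link b a as S')"
| link_0: "b < length \<Psi> \<Longrightarrow> length as = length (cxs (\<Psi> ! b)) \<Longrightarrow>
    pstep L \<Psi> (Link b Zero as S) (subst_p (mk_subst (cxs (\<Psi> ! b)) as) (cpi (\<Psi> ! b)))"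
| link_S': "b < length \<Psi> \<Longrightarrow> length as = length (cxs (\<Psi> ! b)) \<Longrightarrow>
    pstep L \<Psi> (Link b (Sc t) as S)
      (subst_p (mk_subst (ck (\<Psi> ! b) # cxs (\<Psi> ! b)) (t # as)) (cnu (\<Psi> ! b)))"
| u_rule: "fstep L m m' \<Longrightarrow> pstep L \<Psi> (Unary (URule k ls rs m) p) (Unary (URule k ls rs m') p)"
| u_sub: "pstep L \<Psi> p p' \<Longrightarrow> pstep L \<Psi> (Unary r p) (Unary r p')"
| b_rule: "fstep L m m' \<Longrightarrow> pstep L \<Psi> (Binary (BRule k i j m) p q) (Binary (BRule k i j m') p q)"
| b_sub1: "pstep L \<Psi> p p' \<Longrightarrow> pstep L \<Psi> (Binary r p q) (Binary r p' q)"
| b_sub2: "pstep L \<Psi> q q' \<Longrightarrow> pstep L \<Psi> (Binary r p q) (Binary r p q')"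
| e_seq: "seq_step L S S' \<Longrightarrow> pstep L \<Psi> (ERule S p) (ERule S' p)"
| e_sub: "pstep L \<Psi> p p' \<Longrightarrow> pstep L \<Psi> (ERule S p) (ERule S p')"

primrec nolinks :: "lkproof \<Rightarrow> bool" where
  "nolinks (Ax A) = True"
| "nolinks (Link b a as S) = False"
| "nolinks (Unary r p) = nolinks p"
| "nolinks (Binary r p q) = (nolinks p \<and> nolinks q)"
| "nolinks (ERule S p) = nolinks p"

primrec dfree_p :: "lkproof \<Rightarrow> bool" where
  "dfree_p (Ax A) = (dsyms_f A = {})"
| "dfree_p (Link b a as S) =
     (dsyms_t a = {} \<and> (\<forall>u\<in>set as. dsyms_t u = {}) \<and> dsyms_seq S = {})"
| "dfree_p (Unary r p) = ((case r of URule k ls rs m \<Rightarrow> dsyms_f m = {}) \<and> dfree_p p)"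
| "dfree_p (Binary r p q) = ((case r of BRule k i j m \<Rightarrow> dsyms_f m = {}) \<and> dfree_p p \<and> dfree_p q)"
| "dfree_p (ERule S p) = (dsyms_seq S = {} \<and> dfree_p p)"

definition normal_proof :: "lkproof \<Rightarrow> bool" where
  "normal_proof p \<longleftrightarrow> nolinks p \<and> dfree_p p"

definition start_link :: "schema \<Rightarrow> nat \<Rightarrow> lkproof" where
  "start_link \<Psi> \<gamma> = Link 0 (num_t \<gamma>) (map Fr (cxs (hd \<Psi>)))
      (subst_seq (mk_subst [cn (hd \<Psi>)] [num_t \<gamma>]) (cseq (hd \<Psi>)))"

text \<open>P is a (normal form) value of \<Psi>\<down>\<gamma>.\<close>
definition schema_eval :: "lang \<Rightarrow> schema \<Rightarrow> nat \<Rightarrow> lkproof \<Rightarrow> bool" where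
  "schema_eval L \<Psi> \<gamma> P \<longleftrightarrow> (pstep L \<Psi>)\<^sup>*\<^sup>* (start_link \<Psi> \<gamma>) P \<and> normal_proof P"

section \<open>Configurations, ancestors, projection terms\<close>

datatype pos = Lp nat | Rp nat

definition positions :: "sequent \<Rightarrow> pos set" where
  "positions S = Lp ` {..<length (fst S)} \<union> Rp ` {..<length (snd S)}"

definition newidx :: "nat list \<Rightarrow> nat \<Rightarrow> nat" where
  "newidx is i = i - card {j \<in> set is. j < i}"

definition mpos :: "rkind \<Rightarrow> pos" where
  "mpos k = (if main_left k then Lp 0 else Rp 0)"

text \<open>Descendant (in the conclusion) of an occurrence of a premise; None = cut formula.\<close>
fun udesc :: "urule \<Rightarrow> pos \<Rightarrow> pos option" where
  "udesc (URule k ls rs m) (Lp i) =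
     (if i \<in> set ls then Some (mpos k) else Some (Lp ((if main_left k then 1 else 0) + newidx ls i)))"
| "udesc (URule k ls rs m) (Rp i) =
     (if i \<in> set rs then Some (mpos k) else Some (Rp ((if main_left k then 0 else 1) + newidx rs i)))"

definition moff :: "rkind \<Rightarrow> bool \<Rightarrow> nat" where
  "moff k left = (if k \<noteq> Cut \<and> main_left k = left then 1 else 0)"

fun bdesc1 :: "brule \<Rightarrow> pos \<Rightarrow> pos option" where
  "bdesc1 (BRule k i j m) (Lp l) =
     (if a1_left k \<and> l = i then (if k = Cut then None else Some (mpos k))
      else Some (Lp (moff k True + (if a1_left k then newidx [i] l else l))))"
| "bdesc1 (BRule k i j m) (Rp l) =
     (if \<not> a1_left k \<and> l = i then (if k = Cut then None else Some (mpos k))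
      else Some (Rp (moff k False + (if a1_left k then l else newidx [i] l))))"

fun bdesc2 :: "brule \<Rightarrow> sequent \<Rightarrow> pos \<Rightarrow> pos option" where
  "bdesc2 (BRule k i j m) (G1, D1) (Lp l) =
     (if a2_left k \<and> l = j then (if k = Cut then None else Some (mpos k))
      else Some (Lp (moff k True + length (if a1_left k then ctx G1 [i] else G1) +
                     (if a2_left k then newidx [j] l else l))))"
| "bdesc2 (BRule k i j m) (G1, D1) (Rp l) =
     (if \<not> a2_left k \<and> l = j then (if k = Cut then None else Some (mpos k))
      else Some (Rp (moff k False + length (if a1_left k then D1 else ctx D1 [i]) +
                     (if a2_left k then l else newidx [j] l))))"

text \<open>Occurrences of a premise that are \<Omega>- or cut-ancestors, given the set M of such
  occurrences of the conclusion.\<close>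
definition premark :: "(pos \<Rightarrow> pos option) \<Rightarrow> sequent \<Rightarrow> pos set \<Rightarrow> pos set" where
  "premark d S M = {p \<in> positions S. case d p of None \<Rightarrow> True | Some q \<Rightarrow> q \<in> M}"

definition unmarked :: "sequent \<Rightarrow> pos set \<Rightarrow> sequent" where
  "unmarked S M = (map (\<lambda>i. fst S ! i) (filter (\<lambda>i. Lp i \<notin> M) [0..<length (fst S)]),
                   map (\<lambda>i. snd S ! i) (filter (\<lambda>i. Rp i \<notin> M) [0..<length (snd S)]))"

text \<open>Rule symbols of projection terms: the inference with its auxiliary formulas recorded.\<close>
datatype uinf = UInf rkind "fm list" "fm list" fm
datatype binf = BInf rkind fm fm fm

datatype pterm = PAx fm | Pr nat "pos set" trm "trm list" | PUn uinf pterm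
  | PW sequent pterm | PPlus pterm pterm | PTimes binf pterm pterm

fun uinf_of :: "urule \<Rightarrow> sequent \<Rightarrow> uinf" where
  "uinf_of (URule k ls rs m) (G, D) = UInf k (map ((!) G) ls) (map ((!) D) rs) m"

fun binf_of :: "brule \<Rightarrow> sequent \<Rightarrow> sequent \<Rightarrow> binf" where
  "binf_of (BRule k i j m) (G1, D1) (G2, D2) =
     BInf k (if a1_left k then G1 ! i else D1 ! i) (if a2_left k then G2 ! j else D2 ! j) m"

fun ukind :: "urule \<Rightarrow> rkind" where "ukind (URule k ls rs m) = k"
fun bkind :: "brule \<Rightarrow> rkind" where "bkind (BRule k i j m) = k"

text \<open>\<Xi>(\<pi>, M), M the \<Omega>- or cut-ancestors among the occurrences of the end-sequent of \<pi>.\<close>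
fun xi :: "lkproof \<Rightarrow> pos set \<Rightarrow> pterm" where
  "xi (Ax A) M = PAx A"
| "xi (Link b a as S) M = Pr b M a as"
| "xi (ERule S p) M = xi p M"
| "xi (Unary r p) M =
     (let M' = premark (udesc r) (concl p) M in
      if mpos (ukind r) \<in> M then xi p M' else PUn (uinf_of r (concl p)) (xi p M'))"
| "xi (Binary r p q) M =
     (let M1 = premark (bdesc1 r) (concl p) M; M2 = premark (bdesc2 r (concl p)) (concl q) M in
      if bkind r = Cut \<or> mpos (bkind r) \<in> M
      then PPlus (PW (unmarked (concl q) M2) (xi p M1)) (PW (unmarked (concl p) M1) (xi q M2))
      else PTimes (binf_of r (concl p) (concl q)) (xi p M1) (xi q M2))"

fun subst_ui :: "(var \<Rightarrow> trm) \<Rightarrow> uinf \<Rightarrow> uinf" where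
  "subst_ui \<sigma> (UInf k as bs m) = UInf k (map (subst_f \<sigma>) as) (map (subst_f \<sigma>) bs) (subst_f \<sigma> m)"
fun subst_bi :: "(var \<Rightarrow> trm) \<Rightarrow> binf \<Rightarrow> binf" where
  "subst_bi \<sigma> (BInf k A B m) = BInf k (subst_f \<sigma> A) (subst_f \<sigma> B) (subst_f \<sigma> m)"

primrec subst_x :: "(var \<Rightarrow> trm) \<Rightarrow> pterm \<Rightarrow> pterm" where
  "subst_x \<sigma> (PAx A) = PAx (subst_f \<sigma> A)"
| "subst_x \<sigma> (Pr b M a as) = Pr b M (subst_t \<sigma> a) (map (subst_t \<sigma>) as)"
| "subst_x \<sigma> (PUn r X) = PUn (subst_ui \<sigma> r) (subst_x \<sigma> X)"
| "subst_x \<sigma> (PW S X) = PW (subst_seq \<sigma> S) (subst_x \<sigma> X)"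
| "subst_x \<sigma> (PPlus X Y) = PPlus (subst_x \<sigma> X) (subst_x \<sigma> Y)"
| "subst_x \<sigma> (PTimes r X Y) = PTimes (subst_bi \<sigma> r) (subst_x \<sigma> X) (subst_x \<sigma> Y)"

inductive xstep :: "lang \<Rightarrow> schema \<Rightarrow> pterm \<Rightarrow> pterm \<Rightarrow> bool" for L \<Psi> where
  ax: "fstep L A A' \<Longrightarrow> xstep L \<Psi> (PAx A) (PAx A')"
| pr_a: "tstep L a a' \<Longrightarrow> xstep L \<Psi> (Pr b M a as) (Pr b M a' as)"
| pr_as: "lstep (tstep L) as as' \<Longrightarrow> xstep L \<Psi> (Pr b M a as) (Pr b M a as')"
| pr_0: "b < length \<Psi> \<Longrightarrow> length as = length (cxs (\<Psi> ! b)) \<Longrightarrow>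
    xstep L \<Psi> (Pr b M Zero as) (subst_x (mk_subst (cxs (\<Psi> ! b)) as) (xi (cpi (\<Psi> ! b)) M))"
| pr_S: "b < length \<Psi> \<Longrightarrow> length as = length (cxs (\<Psi> ! b)) \<Longrightarrow>
    xstep L \<Psi> (Pr b M (Sc t) as)
      (subst_x (mk_subst (ck (\<Psi> ! b) # cxs (\<Psi> ! b)) (t # as)) (xi (cnu (\<Psi> ! b)) M))"
| un_l: "lstep (fstep L) as as' \<Longrightarrow> xstep L \<Psi> (PUn (UInf k as bs m) X) (PUn (UInf k as' bs m) X)"
| un_r: "lstep (fstep L) bs bs' \<Longrightarrow> xstep L \<Psi> (PUn (UInf k as bs m) X) (PUn (UInf k as bs' m) X)"
| un_m: "fstep L m m' \<Longrightarrow> xstep L \<Psi> (PUn (UInf k as bs m) X) (PUn (UInf k as bs m') X)"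
| un_sub: "xstep L \<Psi> X X' \<Longrightarrow> xstep L \<Psi> (PUn r X) (PUn r X')"
| w_seq: "seq_step L S S' \<Longrightarrow> xstep L \<Psi> (PW S X) (PW S' X)"
| w_sub: "xstep L \<Psi> X X' \<Longrightarrow> xstep L \<Psi> (PW S X) (PW S X')"
| plus1: "xstep L \<Psi> X X' \<Longrightarrow> xstep L \<Psi> (PPlus X Y) (PPlus X' Y)"
| plus2: "xstep L \<Psi> Y Y' \<Longrightarrow> xstep L \<Psi> (PPlus X Y) (PPlus X Y')"
| times_1: "fstep L A A' \<Longrightarrow> xstep L \<Psi> (PTimes (BInf k A B m) X Y) (PTimes (BInf k A' B m) X Y)"
| times_2: "fstep L B B' \<Longrightarrow> xstep L \<Psi> (PTimes (BInf k A B m) X Y) (PTimes (BInf k A B' m) X Y)"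
| times_m: "fstep L m m' \<Longrightarrow> xstep L \<Psi> (PTimes (BInf k A B m) X Y) (PTimes (BInf k A B m') X Y)"
| times_s1: "xstep L \<Psi> X X' \<Longrightarrow> xstep L \<Psi> (PTimes r X Y) (PTimes r X' Y)"
| times_s2: "xstep L \<Psi> Y Y' \<Longrightarrow> xstep L \<Psi> (PTimes r X Y) (PTimes r X Y')"

primrec nopr :: "pterm \<Rightarrow> bool" where
  "nopr (PAx A) = True"
| "nopr (Pr b M a as) = False"
| "nopr (PUn r X) = nopr X"
| "nopr (PW S X) = nopr X"
| "nopr (PPlus X Y) = (nopr X \<and> nopr Y)"
| "nopr (PTimes r X Y) = (nopr X \<and> nopr Y)"

definition start_pr :: "schema \<Rightarrow> nat \<Rightarrow> pterm" where
  "start_pr \<Psi> \<gamma> = Pr 0 {} (num_t \<gamma>) (map Fr (cxs (hd \<Psi>)))"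

text \<open>X is a (normal form) value of \<Xi>(\<Psi>)\<down>\<gamma>: reachable, irreducible, no projection symbols.\<close>
definition proj_eval :: "lang \<Rightarrow> schema \<Rightarrow> nat \<Rightarrow> pterm \<Rightarrow> bool" where
  "proj_eval L \<Psi> \<gamma> X \<longleftrightarrow> (xstep L \<Psi>)\<^sup>*\<^sup>* (start_pr \<Psi> \<gamma>) X \<and> nopr X \<and> \<not> (\<exists>Y. xstep L \<Psi> X Y)"

text \<open>Realising a recorded rule symbol on a concrete lkproof: the auxiliary formulas are
  taken as (the first unused) occurrences of the recorded formulas.\<close>
fun pickp :: "fm list \<Rightarrow> nat list \<Rightarrow> fm list \<Rightarrow> nat list" where
  "pickp xs used [] = []"
| "pickp xs used (a # as) =
     (let i = (LEAST i. i < length xs \<and> i \<notin> set used \<and> xs ! i = a) in i # pickp xs (i # used) as)"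

fun urule_at :: "uinf \<Rightarrow> sequent \<Rightarrow> urule" where
  "urule_at (UInf k as bs m) (G, D) = URule k (pickp G [] as) (pickp D [] bs) m"

fun brule_at :: "binf \<Rightarrow> sequent \<Rightarrow> sequent \<Rightarrow> brule" where
  "brule_at (BInf k A B m) (G1, D1) (G2, D2) =
     BRule k (hd (pickp (if a1_left k then G1 else D1) [] [A]))
             (hd (pickp (if a2_left k then G2 else D2) [] [B])) m"

definition weaken :: "sequent \<Rightarrow> lkproof \<Rightarrow> lkproof" where
  "weaken S p = foldr (\<lambda>A q. Unary (URule WeakR [] [] A) q) (snd S)
                  (foldr (\<lambda>A q. Unary (URule WeakL [] [] A) q) (fst S) p)"

fun evalp :: "pterm \<Rightarrow> lkproof set" where
  "evalp (PAx A) = {Ax A}"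
| "evalp (Pr b M a as) = {}"
| "evalp (PUn r X) = (\<lambda>p. Unary (urule_at r (concl p)) p) ` evalp X"
| "evalp (PW S X) = weaken S ` evalp X"
| "evalp (PPlus X Y) = evalp X \<union> evalp Y"
| "evalp (PTimes r X Y) = {Binary (brule_at r (concl p) (concl q)) p q | p q. p \<in> evalp X \<and> q \<in> evalp Y}"

definition PR :: "lkproof \<Rightarrow> lkproof set" where
  "PR p = evalp (xi p {})"

end

theory Submission
  imports Defs
begin


definition conv :: "('a \<Rightarrow> 'a \<Rightarrow> bool) \<Rightarrow> 'a \<Rightarrow> 'a \<Rightarrow> bool" where
  "conv R = (\<lambda>a b. R a b \<or> R b a)\<^sup>*\<^sup>*"

lemma conv_refl[simp]: "conv R a a" by (simp add: conv_def)

lemma conv_sym: "conv R a b \<Longrightarrow> conv R b a"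
  unfolding conv_def
proof (induction rule: rtranclp_induct)
  case base then show ?case by simp
next
  case (step y z)
  then show ?case by (auto intro: converse_rtranclp_into_rtranclp)
qed

lemma conv_trans: "conv R a b \<Longrightarrow> conv R b c \<Longrightarrow> conv R a c"
  unfolding conv_def by (rule rtranclp_trans)

lemma conv_step: "R a b \<Longrightarrow> conv R a b"
  unfolding conv_def by auto

lemma rtranclp_conv: "R\<^sup>*\<^sup>* a b \<Longrightarrow> conv R a b"
  unfolding conv_def by (induction rule: rtranclp_induct) (auto intro: rtranclp.rtrancl_into_rtrancl)

lemma rtranclp_map: "(\<And>a b. R a b \<Longrightarrow> S (f a) (f b)) \<Longrightarrow> R\<^sup>*\<^sup>* a b \<Longrightarrow> S\<^sup>*\<^sup>* (f a) (f b)"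
  by (erule rtranclp_induct) (auto intro: rtranclp.rtrancl_into_rtrancl)

lemma conv_map: "(\<And>a b. R a b \<Longrightarrow> S (f a) (f b)) \<Longrightarrow> conv R a b \<Longrightarrow> conv S (f a) (f b)"
  unfolding conv_def by (erule rtranclp_induct) (auto intro: rtranclp.rtrancl_into_rtrancl)

lemma lstep_cons: "lstep R xs ys \<Longrightarrow> lstep R (z#xs) (z#ys)"
  unfolding lstep_def by (metis append_Cons)

lemma lstep_head: "R x y \<Longrightarrow> lstep R (x#xs) (y#xs)"
  unfolding lstep_def by (metis append_Nil)

lemma rtranclp_lstep: "list_all2 (R\<^sup>*\<^sup>*) xs ys \<Longrightarrow> (lstep R)\<^sup>*\<^sup>* xs ys"
proof (induction rule: list_all2_induct)
  case Nil then show ?case by simp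
next
  case (Cons x xs y ys)
  have "(lstep R)\<^sup>*\<^sup>* (x#xs) (y#xs)"
    using rtranclp_map[of R "lstep R" "\<lambda>a. a # xs", OF lstep_head Cons(1)] .
  moreover have "(lstep R)\<^sup>*\<^sup>* (y#xs) (y#ys)"
    using rtranclp_map[of "lstep R" "lstep R" "\<lambda>a. y # a", OF lstep_cons Cons(3)] .
  ultimately show ?case by simp
qed

lemma conv_lstep: "list_all2 (conv R) xs ys \<Longrightarrow> conv (lstep R) xs ys"
proof (induction rule: list_all2_induct)
  case Nil then show ?case by simp
next
  case (Cons x xs y ys)
  have "conv (lstep R) (x#xs) (y#xs)"
    using conv_map[of R "lstep R" "\<lambda>a. a # xs", OF lstep_head Cons(1)] .
  moreover have "conv (lstep R) (y#xs) (y#ys)"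
    using conv_map[of "lstep R" "lstep R" "\<lambda>a. y # a", OF lstep_cons Cons(3)] .
  ultimately show ?case by (rule conv_trans)
qed

lemma lstep_list_all2: "lstep R xs ys \<Longrightarrow> (\<And>x y. R x y \<Longrightarrow> R' x y) \<Longrightarrow> (\<And>x. R' x x) \<Longrightarrow> list_all2 R' xs ys"
  unfolding lstep_def by (auto simp: list_all2_appendI list_all2_refl)

lemma lstep_length: "lstep R xs ys \<Longrightarrow> length xs = length ys"
  unfolding lstep_def by auto

lemma mk_subst_Cons: "mk_subst (w#ws) (t#ts) v = (if v = w then t else mk_subst ws ts v)"
  by (simp add: mk_subst_def)
lemma mk_subst_Nil1: "mk_subst [] ts v = Fr v" by (simp add: mk_subst_def)
lemma mk_subst_Nil2: "mk_subst ws [] v = Fr v" by (simp add: mk_subst_def)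

lemma mk_subst_rel: "list_all2 R ts ts' \<Longrightarrow> (\<And>v. R (Fr v) (Fr v)) \<Longrightarrow> R (mk_subst vs ts v) (mk_subst vs ts' v)"
proof (induction vs arbitrary: ts ts')
  case Nil then show ?case by (simp add: mk_subst_Nil1)
next
  case (Cons w ws)
  show ?case
  proof (cases ts)
    case Nil then show ?thesis using Cons by (simp add: mk_subst_Nil2)
  next
    case (Cons t ts0)
    with Cons.prems obtain t' ts0' where "ts' = t' # ts0'" "R t t'" "list_all2 R ts0 ts0'"
      by (auto simp: list_all2_Cons1)
    moreover have "R (mk_subst ws ts0 v) (mk_subst ws ts0' v)"
      using Cons.IH[OF _ Cons.prems(2)] \<open>list_all2 R ts0 ts0'\<close> by blast
    ultimately show ?thesis using Cons by (auto simp add: mk_subst_Cons)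
  qed
qed

primrec bdok :: "nat \<Rightarrow> trm \<Rightarrow> bool" where
  "bdok n (Bd i) = (i < n)"
| "bdok n (Fr v) = True"
| "bdok n Zero = True"
| "bdok n (Sc u) = bdok n u"
| "bdok n (Fn g us) = list_all (bdok n) us"

lemma sort_of_bdok: "sort_of L env t \<noteq> None \<Longrightarrow> bdok (length env) t"
proof (induction t)
  case (Fn g us)
  then have M: "map (sort_of L env) us = map Some (fst (fsig L g))"
    by (auto split: if_splits)
  have "\<forall>u\<in>set us. sort_of L env u \<noteq> None"
  proof (intro ballI)
    fix u assume "u \<in> set us"
    then have "sort_of L env u \<in> set (map Some (fst (fsig L g)))"
      using M by (metis image_eqI list.set_map)
    then show "sort_of L env u \<noteq> None" by auto
  qed
  then show ?case using Fn by (auto simp: list_all_iff)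
qed (auto split: if_splits)

lemma lift_subst_closed: "bdok 0 t \<Longrightarrow> lift_t d (subst_t \<sigma> t) = subst_t (lift_t d \<circ> \<sigma>) t"
  by (induction t) (auto simp: list_all_iff)

inductive tpar :: "lang \<Rightarrow> trm \<Rightarrow> trm \<Rightarrow> bool" for L where
  bd: "tpar L (Bd i) (Bd i)"
| fr: "tpar L (Fr v) (Fr v)"
| zero: "tpar L Zero Zero"
| sc: "tpar L u u' \<Longrightarrow> tpar L (Sc u) (Sc u')"
| fn: "list_all2 (tpar L) us us' \<Longrightarrow> tpar L (Fn g us) (Fn g us')"
| base: "fsig L (FD f) = (Omega # ss, r) \<Longrightarrow> length us = length ss \<Longrightarrow> list_all2 (tpar L) us us' \<Longrightarrow>
    tpar L (Fn (FD f) (Zero # us)) (subst_t (mk_subst (xvars ss) us') (fbase L f))"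
| rec: "fsig L (FD f) = (Omega # ss, r) \<Longrightarrow> length us = length ss \<Longrightarrow> tpar L u u' \<Longrightarrow>
    list_all2 (tpar L) us us' \<Longrightarrow>
    tpar L (Fn (FD f) (Sc u # us)) (subst_t (mk_subst (yvar # xvars ss) (u' # us')) (fstepr L f))"


lemma list_all2_dev: "list_all2 (\<lambda>a b. Q b (f a)) us us' \<Longrightarrow> list_all2 Q us' (map f us)"
  by (auto simp: list_all2_conv_all_nth)

lemma list_all2_map_same: "(\<And>u. u \<in> set us \<Longrightarrow> Q (f u) (g u)) \<Longrightarrow> list_all2 Q (map f us) (map g us)"
  by (auto simp: list_all2_conv_all_nth)

lemma list_all2_refl': "(\<And>u. u \<in> set us \<Longrightarrow> Q u u) \<Longrightarrow> list_all2 Q us us"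
  by (auto simp: list_all2_conv_all_nth)

lemma tpar_refl[simp, intro]: "tpar L t t"
  by (induction t) (auto intro: tpar.intros list_all2_refl')

lemma tpar_subst: "(\<And>v. tpar L (\<sigma> v) (\<sigma>' v)) \<Longrightarrow> tpar L (subst_t \<sigma> t) (subst_t \<sigma>' t)"
  by (induction t) (auto intro!: tpar.intros list_all2_map_same)

definition fok :: "lang \<Rightarrow> nat \<Rightarrow> nat \<Rightarrow> bool" where
  "fok L f n \<longleftrightarrow> (\<exists>ss r. fsig L (FD f) = (Omega # ss, r) \<and> length ss = n)"
definition fargs :: "lang \<Rightarrow> nat \<Rightarrow> sort list" where
  "fargs L f = tl (fst (fsig L (FD f)))"

lemma fok_iff: "fsig L (FD f) = (Omega # ss, r) \<Longrightarrow> fok L f n \<longleftrightarrow> length ss = n"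
  by (auto simp: fok_def)
lemma fargs_eq: "fsig L (FD f) = (Omega # ss, r) \<Longrightarrow> fargs L f = ss"
  by (auto simp: fargs_def)
lemma fokE: "fok L f n \<Longrightarrow> fsig L (FD f) = (Omega # fargs L f, snd (fsig L (FD f))) \<and> length (fargs L f) = n"
  by (auto simp: fok_def fargs_def)

fun tdev :: "lang \<Rightarrow> trm \<Rightarrow> trm" where
  "tdev L (Bd i) = Bd i"
| "tdev L (Fr v) = Fr v"
| "tdev L Zero = Zero"
| "tdev L (Sc u) = Sc (tdev L u)"
| "tdev L (Fn (FD f) (Zero # us)) = (if fok L f (length us)
     then subst_t (mk_subst (xvars (fargs L f)) (map (tdev L) us)) (fbase L f)
     else Fn (FD f) (Zero # map (tdev L) us))"
| "tdev L (Fn (FD f) (Sc u # us)) = (if fok L f (length us)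
     then subst_t (mk_subst (yvar # xvars (fargs L f)) (tdev L u # map (tdev L) us)) (fstepr L f)
     else Fn (FD f) (Sc (tdev L u) # map (tdev L) us))"
| "tdev L (Fn g us) = Fn g (map (tdev L) us)"

inductive_cases tpar_ZeroE: "tpar L Zero y"
inductive_cases tpar_ScE: "tpar L (Sc u) y"

lemma tpar_Zero: "tpar L Zero y \<Longrightarrow> y = Zero"
  by (erule tpar_ZeroE) auto
lemma tpar_Sc: "tpar L (Sc u) y \<Longrightarrow> \<exists>u'. y = Sc u' \<and> tpar L u u'"
  by (erule tpar_ScE) auto

lemma mk_subst_tpar: "list_all2 (tpar L) ts ts' \<Longrightarrow> tpar L (mk_subst vs ts v) (mk_subst vs ts' v)"
  by (rule mk_subst_rel) auto

lemma tpar_dev: "tpar L t t' \<Longrightarrow> tpar L t' (tdev L t)"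
proof (induction rule: tpar.induct)
  case (fn us us' g)
  then have IH: "list_all2 (tpar L) us' (map (tdev L) us)"
    by (intro list_all2_dev) (auto elim: list_all2_mono)
  have gen: "tpar L (Fn g us') (Fn g (map (tdev L) us))" using IH by (rule tpar.fn)
  show ?case
  proof (cases "\<exists>f us0. g = FD f \<and> us = Zero # us0 \<and> fok L f (length us0)")
    case True
    then obtain f us0 where g: "g = FD f" "us = Zero # us0" "fok L f (length us0)" by blast
    from fn.IH g obtain z us0' where us': "us' = z # us0'" "tpar L Zero z"
      and L0: "list_all2 (\<lambda>a b. tpar L a b \<and> tpar L b (tdev L a)) us0 us0'"
      by (auto simp: list_all2_Cons1)
    have z: "z = Zero" using us'(2) by (rule tpar_Zero)
    from fokE[OF g(3)] have sig: "fsig L (FD f) = (Omega # fargs L f, snd (fsig L (FD f)))" 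
      and len: "length (fargs L f) = length us0" by auto
    have "list_all2 (tpar L) us0' (map (tdev L) us0)"
      using L0 by (intro list_all2_dev) (auto elim: list_all2_mono)
    moreover have "length us0' = length (fargs L f)" using L0 len by (auto dest: list_all2_lengthD)
    ultimately show ?thesis using g us' z tpar.base[OF sig] by simp
  next
    case F1: False
    show ?thesis
    proof (cases "\<exists>f u us0. g = FD f \<and> us = Sc u # us0 \<and> fok L f (length us0)")
      case True
      then obtain f u us0 where g: "g = FD f" "us = Sc u # us0" "fok L f (length us0)" by blast
      from fn.IH g obtain z us0' where us': "us' = z # us0'" "tpar L (Sc u) z" "tpar L z (Sc (tdev L u))"
        and L0: "list_all2 (\<lambda>a b. tpar L a b \<and> tpar L b (tdev L a)) us0 us0'"
        by (auto simp: list_all2_Cons1)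
      obtain u' where z: "z = Sc u'" using tpar_Sc[OF us'(2)] by blast
      have u': "tpar L u' (tdev L u)" using tpar_Sc[OF us'(3)[unfolded z]] by auto
      from fokE[OF g(3)] have sig: "fsig L (FD f) = (Omega # fargs L f, snd (fsig L (FD f)))" 
        and len: "length (fargs L f) = length us0" by auto
      have "list_all2 (tpar L) us0' (map (tdev L) us0)"
        using L0 by (intro list_all2_dev) (auto elim: list_all2_mono)
      moreover have "length us0' = length (fargs L f)" using L0 len by (auto dest: list_all2_lengthD)
      ultimately show ?thesis using g us' z u' tpar.rec[OF sig] by simp
    next
      case False
      have "tdev L (Fn g us) = Fn g (map (tdev L) us)"
      proof (cases g)
        case (FD f)
        show ?thesis
        proof (cases us)
          case (Cons x us0)
          then show ?thesis using F1 False FD by (cases x) auto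
        qed (use FD in auto)
      qed auto
      then show ?thesis using gen by simp
    qed
  qed
next
  case (base f ss r us us')
  have "list_all2 (tpar L) us' (map (tdev L) us)"
    using base.IH by (intro list_all2_dev) (auto elim: list_all2_mono)
  then show ?case using base.hyps
    by (auto simp: fok_iff fargs_eq intro!: tpar_subst mk_subst_tpar)
next
  case (rec f ss r us u u' us')
  have "list_all2 (tpar L) us' (map (tdev L) us)"
    using rec.IH by (intro list_all2_dev) (auto elim: list_all2_mono)
  then show ?case using rec.hyps rec.IH
    by (auto simp: fok_iff fargs_eq intro!: tpar_subst mk_subst_tpar)
qed (auto intro: tpar.intros)


lemma tpar_diamond: "tpar L t a \<Longrightarrow> tpar L t b \<Longrightarrow> \<exists>c. tpar L a c \<and> tpar L b c"
  using tpar_dev by blast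

lemma wf_closed: "wf_lang L \<Longrightarrow> bdok 0 (fbase L f) \<and> bdok 0 (fstepr L f)"
  unfolding wf_lang_def
  by (metis list.size(3) option.distinct(1) sort_of_bdok)

lemma fun_mk_subst: "(\<And>v. h (Fr v) = Fr v) \<Longrightarrow> h (mk_subst vs ts v) = mk_subst vs (map h ts) v"
proof (induction vs arbitrary: ts)
  case Nil then show ?case by (simp add: mk_subst_Nil1)
next
  case (Cons w ws) then show ?case by (cases ts) (auto simp: mk_subst_Cons mk_subst_Nil2)
qed

lemma lift_mk_subst: "lift_t d \<circ> mk_subst vs ts = mk_subst vs (map (lift_t d) ts)"
  by (rule ext) (simp add: fun_mk_subst)

lemma tpar_lift: "tpar L u u' \<Longrightarrow> wf_lang L \<Longrightarrow> tpar L (lift_t d u) (lift_t d u')"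
proof (induction rule: tpar.induct)
  case (fn us us' g)
  then show ?case by (auto intro!: tpar.fn simp: list.rel_map elim: list_all2_mono)
next
  case (base f ss r us us')
  have "lift_t d (subst_t (mk_subst (xvars ss) us') (fbase L f)) =
        subst_t (mk_subst (xvars ss) (map (lift_t d) us')) (fbase L f)"
    using wf_closed[OF base.prems] by (simp add: lift_subst_closed lift_mk_subst)
  moreover have "tpar L (Fn (FD f) (Zero # map (lift_t d) us)) (subst_t (mk_subst (xvars ss) (map (lift_t d) us')) (fbase L f))"
    using base by (intro tpar.base) (auto simp: list.rel_map elim: list_all2_mono)
  ultimately show ?case by simp
next
  case (rec f ss r us u u' us')
  have "lift_t d (subst_t (mk_subst (yvar # xvars ss) (u' # us')) (fstepr L f)) =
        subst_t (mk_subst (yvar # xvars ss) (lift_t d u' # map (lift_t d) us')) (fstepr L f)"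
    using wf_closed[OF rec.prems] by (simp add: lift_subst_closed lift_mk_subst)
  moreover have "tpar L (Fn (FD f) (Sc (lift_t d u) # map (lift_t d) us)) (subst_t (mk_subst (yvar # xvars ss) (lift_t d u' # map (lift_t d) us')) (fstepr L f))"
    using rec by (intro tpar.rec) (auto simp: list.rel_map elim: list_all2_mono)
  ultimately show ?case by simp
qed (auto intro: tpar.intros)

lemma tstep_Fn: "lstep (tstep L) us us' \<Longrightarrow> tstep L (Fn g us) (Fn g us')"
  unfolding lstep_def by (auto intro: tstep.fn)

lemma tstep_tpar: "tstep L t t' \<Longrightarrow> tpar L t t'"
proof (induction rule: tstep.induct)
  case (base f ss r us)
  then show ?case using tpar.base[of L f ss r us us] by (auto intro: list_all2_refl')
next
  case (rec f ss r us u)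
  then show ?case using tpar.rec[of L f ss r us u u us] by (auto intro: list_all2_refl')
next
  case (fn u u' g xs ys)
  then show ?case by (auto intro!: tpar.fn list_all2_appendI list_all2_refl')
qed (auto intro: tpar.intros)

lemma rtc_Fn: "(lstep (tstep L))\<^sup>*\<^sup>* us us' \<Longrightarrow> (tstep L)\<^sup>*\<^sup>* (Fn g us) (Fn g us')"
  by (induction rule: rtranclp_induct) (auto intro: rtranclp.rtrancl_into_rtrancl tstep_Fn)

lemma rtc_Sc: "(tstep L)\<^sup>*\<^sup>* u u' \<Longrightarrow> (tstep L)\<^sup>*\<^sup>* (Sc u) (Sc u')"
  by (induction rule: rtranclp_induct) (auto intro: rtranclp.rtrancl_into_rtrancl tstep.sc)

lemma tpar_tstep: "tpar L t t' \<Longrightarrow> (tstep L)\<^sup>*\<^sup>* t t'"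
proof (induction rule: tpar.induct)
  case (sc u u')
  show ?case using sc.IH by (rule rtc_Sc)
next
  case (fn us us' g)
  then have "(lstep (tstep L))\<^sup>*\<^sup>* us us'" by (intro rtranclp_lstep) (auto elim: list_all2_mono)
  then show ?case by (rule rtc_Fn)
next
  case (base f ss r us us')
  then have "list_all2 ((tstep L)\<^sup>*\<^sup>*) (Zero # us) (Zero # us')" by (auto elim: list_all2_mono)
  then have "(lstep (tstep L))\<^sup>*\<^sup>* (Zero # us) (Zero # us')" by (rule rtranclp_lstep)
  then have "(tstep L)\<^sup>*\<^sup>* (Fn (FD f) (Zero # us)) (Fn (FD f) (Zero # us'))"
    by (rule rtc_Fn)
  moreover have "tstep L (Fn (FD f) (Zero # us')) (subst_t (mk_subst (xvars ss) us') (fbase L f))"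
    using base by (intro tstep.base) (auto dest: list_all2_lengthD)
  ultimately show ?case by simp
next
  case (rec f ss r us u u' us')
  have "(tstep L)\<^sup>*\<^sup>* (Sc u) (Sc u')" using rec.IH(1) by (rule rtc_Sc)
  then have "list_all2 ((tstep L)\<^sup>*\<^sup>*) (Sc u # us) (Sc u' # us')" using rec by (auto elim: list_all2_mono)
  then have "(lstep (tstep L))\<^sup>*\<^sup>* (Sc u # us) (Sc u' # us')" by (rule rtranclp_lstep)
  then have "(tstep L)\<^sup>*\<^sup>* (Fn (FD f) (Sc u # us)) (Fn (FD f) (Sc u' # us'))"
    by (rule rtc_Fn)
  moreover have "tstep L (Fn (FD f) (Sc u' # us')) (subst_t (mk_subst (yvar # xvars ss) (u' # us')) (fstepr L f))"
    using rec by (intro tstep.rec) (auto dest: list_all2_lengthD)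
  ultimately show ?case by simp
qed auto


inductive fpar :: "lang \<Rightarrow> fm \<Rightarrow> fm \<Rightarrow> bool" for L where
  atom: "list_all2 (tpar L) us us' \<Longrightarrow> fpar L (Atom P us) (Atom P us')"
| base: "psig L (PD p) = Omega # ss \<Longrightarrow> length us = length ss \<Longrightarrow> list_all2 (tpar L) us us' \<Longrightarrow>
    fpar L (Atom (PD p) (Zero # us)) (subst_f (mk_subst (xvars ss) us') (pbase L p))"
| rec: "psig L (PD p) = Omega # ss \<Longrightarrow> length us = length ss \<Longrightarrow> tpar L u u' \<Longrightarrow>
    list_all2 (tpar L) us us' \<Longrightarrow>
    fpar L (Atom (PD p) (Sc u # us)) (subst_f (mk_subst (yvar # xvars ss) (u' # us')) (pstepr L p))"
| neg: "fpar L A A' \<Longrightarrow> fpar L (Neg A) (Neg A')"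
| conj: "fpar L A A' \<Longrightarrow> fpar L B B' \<Longrightarrow> fpar L (Conj A B) (Conj A' B')"
| disj: "fpar L A A' \<Longrightarrow> fpar L B B' \<Longrightarrow> fpar L (Disj A B) (Disj A' B')"
| imp: "fpar L A A' \<Longrightarrow> fpar L B B' \<Longrightarrow> fpar L (Imp A B) (Imp A' B')"
| all: "fpar L A A' \<Longrightarrow> fpar L (All s A) (All s A')"
| ex: "fpar L A A' \<Longrightarrow> fpar L (Ex s A) (Ex s A')"

lemma fpar_refl[simp, intro]: "fpar L A A"
  by (induction A) (auto intro: fpar.intros list_all2_refl')

lemma fpar_subst: "(\<And>v. tpar L (\<sigma> v) (\<sigma>' v)) \<Longrightarrow> wf_lang L \<Longrightarrow> fpar L (subst_f \<sigma> A) (subst_f \<sigma>' A)"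
proof (induction A arbitrary: \<sigma> \<sigma>')
  case (Atom P us)
  then show ?case by (auto intro!: fpar.atom list_all2_map_same tpar_subst)
next
  case (All s A)
  have "\<And>v. tpar L ((lift_t 0 \<circ> \<sigma>) v) ((lift_t 0 \<circ> \<sigma>') v)" using All.prems by (auto intro: tpar_lift)
  then show ?case using All by (auto intro: fpar.all)
next
  case (Ex s A)
  have "\<And>v. tpar L ((lift_t 0 \<circ> \<sigma>) v) ((lift_t 0 \<circ> \<sigma>') v)" using Ex.prems by (auto intro: tpar_lift)
  then show ?case using Ex by (auto intro: fpar.ex)
qed (auto intro: fpar.intros)

definition pok :: "lang \<Rightarrow> nat \<Rightarrow> nat \<Rightarrow> bool" where
  "pok L p n \<longleftrightarrow> (\<exists>ss. psig L (PD p) = Omega # ss \<and> length ss = n)"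
definition pargs :: "lang \<Rightarrow> nat \<Rightarrow> sort list" where
  "pargs L p = tl (psig L (PD p))"

lemma pok_iff: "psig L (PD p) = Omega # ss \<Longrightarrow> pok L p n \<longleftrightarrow> length ss = n"
  by (auto simp: pok_def)
lemma pargs_eq: "psig L (PD p) = Omega # ss \<Longrightarrow> pargs L p = ss"
  by (auto simp: pargs_def)
lemma pokE: "pok L p n \<Longrightarrow> psig L (PD p) = Omega # pargs L p \<and> length (pargs L p) = n"
  by (auto simp: pok_def pargs_def)

fun fdev :: "lang \<Rightarrow> fm \<Rightarrow> fm" where
  "fdev L (Atom (PD p) (Zero # us)) = (if pok L p (length us)
     then subst_f (mk_subst (xvars (pargs L p)) (map (tdev L) us)) (pbase L p)
     else Atom (PD p) (Zero # map (tdev L) us))"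
| "fdev L (Atom (PD p) (Sc u # us)) = (if pok L p (length us)
     then subst_f (mk_subst (yvar # xvars (pargs L p)) (tdev L u # map (tdev L) us)) (pstepr L p)
     else Atom (PD p) (Sc (tdev L u) # map (tdev L) us))"
| "fdev L (Atom P us) = Atom P (map (tdev L) us)"
| "fdev L (Neg A) = Neg (fdev L A)"
| "fdev L (Conj A B) = Conj (fdev L A) (fdev L B)"
| "fdev L (Disj A B) = Disj (fdev L A) (fdev L B)"
| "fdev L (Imp A B) = Imp (fdev L A) (fdev L B)"
| "fdev L (All s A) = All s (fdev L A)"
| "fdev L (Ex s A) = Ex s (fdev L A)"

lemma list_tpar_dev: "list_all2 (tpar L) us us' \<Longrightarrow> list_all2 (tpar L) us' (map (tdev L) us)"
  by (intro list_all2_dev) (auto elim: list_all2_mono intro: tpar_dev)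

lemma fpar_dev: "fpar L A A' \<Longrightarrow> wf_lang L \<Longrightarrow> fpar L A' (fdev L A)"
proof (induction rule: fpar.induct)
  case (atom us us' P)
  have IH: "list_all2 (tpar L) us' (map (tdev L) us)" using atom.hyps by (rule list_tpar_dev)
  have gen: "fpar L (Atom P us') (Atom P (map (tdev L) us))" using IH by (rule fpar.atom)
  show ?case
  proof (cases "\<exists>p us0. P = PD p \<and> us = Zero # us0 \<and> pok L p (length us0)")
    case True
    then obtain p us0 where g: "P = PD p" "us = Zero # us0" "pok L p (length us0)" by blast
    from atom.hyps g obtain z us0' where us': "us' = z # us0'" "tpar L Zero z"
      and L0: "list_all2 (tpar L) us0 us0'"
      by (auto simp: list_all2_Cons1)
    have z: "z = Zero" using us'(2) by (rule tpar_Zero)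
    from pokE[OF g(3)] have sig: "psig L (PD p) = Omega # pargs L p" 
      and len: "length (pargs L p) = length us0" by auto
    have "list_all2 (tpar L) us0' (map (tdev L) us0)" using L0 by (rule list_tpar_dev)
    moreover have "length us0' = length (pargs L p)" using L0 len by (auto dest: list_all2_lengthD)
    ultimately show ?thesis using g us' z fpar.base[OF sig] by simp
  next
    case F1: False
    show ?thesis
    proof (cases "\<exists>p u us0. P = PD p \<and> us = Sc u # us0 \<and> pok L p (length us0)")
      case True
      then obtain p u us0 where g: "P = PD p" "us = Sc u # us0" "pok L p (length us0)" by blast
      from atom.hyps g obtain z us0' where us': "us' = z # us0'" "tpar L (Sc u) z"
        and L0: "list_all2 (tpar L) us0 us0'"
        by (auto simp: list_all2_Cons1)
      obtain u' where z: "z = Sc u'" and uu: "tpar L u u'" using tpar_Sc[OF us'(2)] by blast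
      have u': "tpar L u' (tdev L u)" using uu by (rule tpar_dev)
      from pokE[OF g(3)] have sig: "psig L (PD p) = Omega # pargs L p" 
        and len: "length (pargs L p) = length us0" by auto
      have "list_all2 (tpar L) us0' (map (tdev L) us0)" using L0 by (rule list_tpar_dev)
      moreover have "length us0' = length (pargs L p)" using L0 len by (auto dest: list_all2_lengthD)
      ultimately show ?thesis using g us' z u' fpar.rec[OF sig] by simp
    next
      case False
      have "fdev L (Atom P us) = Atom P (map (tdev L) us)"
      proof (cases P)
        case (PD p)
        show ?thesis
        proof (cases us)
          case (Cons x us0)
          then show ?thesis using F1 False PD by (cases x) auto
        qed (use PD in auto)
      qed auto
      then show ?thesis using gen by simp
    qed
  qed
next
  case (base p ss us us')
  have "list_all2 (tpar L) us' (map (tdev L) us)" using base.hyps(3) by (rule list_tpar_dev)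
  then show ?case using base
    by (auto simp: pok_iff pargs_eq intro!: fpar_subst mk_subst_tpar)
next
  case (rec p ss us u u' us')
  have "list_all2 (tpar L) us' (map (tdev L) us)" using rec.hyps(4) by (rule list_tpar_dev)
  moreover have "tpar L u' (tdev L u)" using rec.hyps(3) by (rule tpar_dev)
  ultimately show ?case using rec
    by (auto simp: pok_iff pargs_eq intro!: fpar_subst mk_subst_tpar)
qed (auto intro: fpar.intros)

lemma list_all2_lstep_tpar: "lstep (tstep L) us us' \<Longrightarrow> list_all2 (tpar L) us us'"
  using lstep_list_all2[of "tstep L" us us' "tpar L"] tstep_tpar tpar_refl by blast

lemma fstep_fpar: "fstep L A A' \<Longrightarrow> fpar L A A'"
proof (induction rule: fstep.induct)
  case (arg us us' P)
  then show ?case by (intro fpar.atom list_all2_lstep_tpar)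
next
  case (base p ss us)
  then show ?case using fpar.base[of L p ss us us] by (auto intro: list_all2_refl')
next
  case (rec p ss us u)
  then show ?case using fpar.rec[of L p ss us u u us] by (auto intro: list_all2_refl')
qed (auto intro: fpar.intros)

lemma rtc_ctx: "(\<And>a b. R a b \<Longrightarrow> S (f a) (f b)) \<Longrightarrow> R\<^sup>*\<^sup>* a b \<Longrightarrow> S\<^sup>*\<^sup>* (f a) (f b)"
  by (rule rtranclp_map)

lemma list_tpar_rtc: "list_all2 (tpar L) us us' \<Longrightarrow> (lstep (tstep L))\<^sup>*\<^sup>* us us'"
  by (intro rtranclp_lstep) (auto elim: list_all2_mono intro: tpar_tstep)

lemma fpar_fstep: "fpar L A A' \<Longrightarrow> (fstep L)\<^sup>*\<^sup>* A A'"
proof (induction rule: fpar.induct)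
  case (atom us us' P)
  then show ?case using rtc_ctx[of "lstep (tstep L)" "fstep L" "Atom P", OF fstep.arg] list_tpar_rtc by blast
next
  case (base p ss us us')
  have "list_all2 (tpar L) (Zero # us) (Zero # us')" using base by auto
  then have "(fstep L)\<^sup>*\<^sup>* (Atom (PD p) (Zero # us)) (Atom (PD p) (Zero # us'))"
    using rtc_ctx[of "lstep (tstep L)" "fstep L" "Atom (PD p)", OF fstep.arg] list_tpar_rtc by blast
  moreover have "fstep L (Atom (PD p) (Zero # us')) (subst_f (mk_subst (xvars ss) us') (pbase L p))"
    using base by (intro fstep.base) (auto dest: list_all2_lengthD)
  ultimately show ?case by simp
next
  case (rec p ss us u u' us')
  have "list_all2 (tpar L) (Sc u # us) (Sc u' # us')" using rec by (auto intro: tpar.sc)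
  then have "(fstep L)\<^sup>*\<^sup>* (Atom (PD p) (Sc u # us)) (Atom (PD p) (Sc u' # us'))"
    using rtc_ctx[of "lstep (tstep L)" "fstep L" "Atom (PD p)", OF fstep.arg] list_tpar_rtc by blast
  moreover have "fstep L (Atom (PD p) (Sc u' # us')) (subst_f (mk_subst (yvar # xvars ss) (u' # us')) (pstepr L p))"
    using rec by (intro fstep.rec) (auto dest: list_all2_lengthD)
  ultimately show ?case by simp
next
  case (neg A A')
  then show ?case using rtc_ctx[of "fstep L" "fstep L" Neg, OF fstep.neg] by blast
next
  case (conj A A' B B')
  then show ?case using rtc_ctx[of "fstep L" "fstep L" "\<lambda>x. Conj x B", OF fstep.conj1]
     rtc_ctx[of "fstep L" "fstep L" "\<lambda>x. Conj A' x", OF fstep.conj2] by (meson rtranclp_trans)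
next
  case (disj A A' B B')
  then show ?case using rtc_ctx[of "fstep L" "fstep L" "\<lambda>x. Disj x B", OF fstep.disj1]
     rtc_ctx[of "fstep L" "fstep L" "\<lambda>x. Disj A' x", OF fstep.disj2] by (meson rtranclp_trans)
next
  case (imp A A' B B')
  then show ?case using rtc_ctx[of "fstep L" "fstep L" "\<lambda>x. Imp x B", OF fstep.imp1]
     rtc_ctx[of "fstep L" "fstep L" "\<lambda>x. Imp A' x", OF fstep.imp2] by (meson rtranclp_trans)
next
  case (all A A' s)
  then show ?case using rtc_ctx[of "fstep L" "fstep L" "All s", OF fstep.all] by blast
next
  case (ex A A' s)
  then show ?case using rtc_ctx[of "fstep L" "fstep L" "Ex s", OF fstep.ex] by blast
qed


fun uipar :: "lang \<Rightarrow> uinf \<Rightarrow> uinf \<Rightarrow> bool" where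
  "uipar L (UInf k as bs m) (UInf k' as' bs' m') =
     (k = k' \<and> list_all2 (fpar L) as as' \<and> list_all2 (fpar L) bs bs' \<and> fpar L m m')"
fun bipar :: "lang \<Rightarrow> binf \<Rightarrow> binf \<Rightarrow> bool" where
  "bipar L (BInf k A B m) (BInf k' A' B' m') = (k = k' \<and> fpar L A A' \<and> fpar L B B' \<and> fpar L m m')"
definition spar :: "lang \<Rightarrow> sequent \<Rightarrow> sequent \<Rightarrow> bool" where
  "spar L S S' \<longleftrightarrow> list_all2 (fpar L) (fst S) (fst S') \<and> list_all2 (fpar L) (snd S) (snd S')"

fun uidev :: "lang \<Rightarrow> uinf \<Rightarrow> uinf" where
  "uidev L (UInf k as bs m) = UInf k (map (fdev L) as) (map (fdev L) bs) (fdev L m)"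
fun bidev :: "lang \<Rightarrow> binf \<Rightarrow> binf" where
  "bidev L (BInf k A B m) = BInf k (fdev L A) (fdev L B) (fdev L m)"
definition sdev :: "lang \<Rightarrow> sequent \<Rightarrow> sequent" where
  "sdev L S = (map (fdev L) (fst S), map (fdev L) (snd S))"

inductive xpar :: "lang \<Rightarrow> schema \<Rightarrow> pterm \<Rightarrow> pterm \<Rightarrow> bool" for L \<Psi> where
  ax: "fpar L A A' \<Longrightarrow> xpar L \<Psi> (PAx A) (PAx A')"
| pr: "tpar L a a' \<Longrightarrow> list_all2 (tpar L) as as' \<Longrightarrow> xpar L \<Psi> (Pr b M a as) (Pr b M a' as')"
| pr0: "b < length \<Psi> \<Longrightarrow> length as = length (cxs (\<Psi> ! b)) \<Longrightarrow> list_all2 (tpar L) as as' \<Longrightarrow>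
    xpar L \<Psi> (Pr b M Zero as) (subst_x (mk_subst (cxs (\<Psi> ! b)) as') (xi (cpi (\<Psi> ! b)) M))"
| prS: "b < length \<Psi> \<Longrightarrow> length as = length (cxs (\<Psi> ! b)) \<Longrightarrow> tpar L t t' \<Longrightarrow> list_all2 (tpar L) as as' \<Longrightarrow>
    xpar L \<Psi> (Pr b M (Sc t) as) (subst_x (mk_subst (ck (\<Psi> ! b) # cxs (\<Psi> ! b)) (t' # as')) (xi (cnu (\<Psi> ! b)) M))"
| un: "uipar L r r' \<Longrightarrow> xpar L \<Psi> X X' \<Longrightarrow> xpar L \<Psi> (PUn r X) (PUn r' X')"
| w: "spar L S S' \<Longrightarrow> xpar L \<Psi> X X' \<Longrightarrow> xpar L \<Psi> (PW S X) (PW S' X')"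
| plus: "xpar L \<Psi> X X' \<Longrightarrow> xpar L \<Psi> Y Y' \<Longrightarrow> xpar L \<Psi> (PPlus X Y) (PPlus X' Y')"
| times: "bipar L r r' \<Longrightarrow> xpar L \<Psi> X X' \<Longrightarrow> xpar L \<Psi> Y Y' \<Longrightarrow> xpar L \<Psi> (PTimes r X Y) (PTimes r' X' Y')"

primrec xdev :: "lang \<Rightarrow> schema \<Rightarrow> pterm \<Rightarrow> pterm" where
  "xdev L \<Psi> (PAx A) = PAx (fdev L A)"
| "xdev L \<Psi> (Pr b M a as) = (case a of
      Zero \<Rightarrow> (if b < length \<Psi> \<and> length as = length (cxs (\<Psi> ! b))
        then subst_x (mk_subst (cxs (\<Psi> ! b)) (map (tdev L) as)) (xi (cpi (\<Psi> ! b)) M)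
        else Pr b M Zero (map (tdev L) as))
    | Sc t \<Rightarrow> (if b < length \<Psi> \<and> length as = length (cxs (\<Psi> ! b))
        then subst_x (mk_subst (ck (\<Psi> ! b) # cxs (\<Psi> ! b)) (tdev L t # map (tdev L) as)) (xi (cnu (\<Psi> ! b)) M)
        else Pr b M (Sc (tdev L t)) (map (tdev L) as))
    | _ \<Rightarrow> Pr b M (tdev L a) (map (tdev L) as))"
| "xdev L \<Psi> (PUn r X) = PUn (uidev L r) (xdev L \<Psi> X)"
| "xdev L \<Psi> (PW S X) = PW (sdev L S) (xdev L \<Psi> X)"
| "xdev L \<Psi> (PPlus X Y) = PPlus (xdev L \<Psi> X) (xdev L \<Psi> Y)"
| "xdev L \<Psi> (PTimes r X Y) = PTimes (bidev L r) (xdev L \<Psi> X) (xdev L \<Psi> Y)"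

lemma uipar_refl[simp]: "uipar L r r" by (cases r) (auto intro: list_all2_refl')
lemma bipar_refl[simp]: "bipar L r r" by (cases r) auto
lemma spar_refl[simp]: "spar L S S" by (auto simp: spar_def intro: list_all2_refl')

lemma xpar_refl[simp, intro]: "xpar L \<Psi> X X"
  by (induction X) (auto intro: xpar.intros list_all2_refl')

lemma list_fpar_subst: "(\<And>v. tpar L (\<sigma> v) (\<sigma>' v)) \<Longrightarrow> wf_lang L \<Longrightarrow>
   list_all2 (fpar L) (map (subst_f \<sigma>) as) (map (subst_f \<sigma>') as)"
  by (auto intro!: list_all2_map_same fpar_subst)

lemma xpar_subst: "(\<And>v. tpar L (\<sigma> v) (\<sigma>' v)) \<Longrightarrow> wf_lang L \<Longrightarrow> xpar L \<Psi> (subst_x \<sigma> X) (subst_x \<sigma>' X)"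
proof (induction X)
  case (PAx A) then show ?case by (auto intro!: xpar.ax fpar_subst)
next
  case (Pr b M a as) then show ?case by (auto intro!: xpar.pr tpar_subst list_all2_map_same)
next
  case (PUn r X) then show ?case
    by (cases r) (auto intro!: xpar.un fpar_subst list_fpar_subst)
next
  case (PW S X) then show ?case
    by (auto intro!: xpar.w simp: spar_def subst_seq_def intro!: list_fpar_subst)
next
  case (PPlus X Y) then show ?case by (auto intro!: xpar.plus)
next
  case (PTimes r X Y) then show ?case by (cases r) (auto intro!: xpar.times fpar_subst)
qed

lemma list_fpar_dev: "list_all2 (fpar L) as as' \<Longrightarrow> wf_lang L \<Longrightarrow> list_all2 (fpar L) as' (map (fdev L) as)"
  by (intro list_all2_dev) (auto elim: list_all2_mono intro: fpar_dev)

lemma uipar_dev: "uipar L r r' \<Longrightarrow> wf_lang L \<Longrightarrow> uipar L r' (uidev L r)"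
  by (cases r; cases r') (auto intro: list_fpar_dev fpar_dev)
lemma bipar_dev: "bipar L r r' \<Longrightarrow> wf_lang L \<Longrightarrow> bipar L r' (bidev L r)"
  by (cases r; cases r') (auto intro: fpar_dev)
lemma spar_dev: "spar L S S' \<Longrightarrow> wf_lang L \<Longrightarrow> spar L S' (sdev L S)"
  by (auto simp: spar_def sdev_def intro: list_fpar_dev)

lemma xpar_dev: "xpar L \<Psi> X X' \<Longrightarrow> wf_lang L \<Longrightarrow> xpar L \<Psi> X' (xdev L \<Psi> X)"
proof (induction rule: xpar.induct)
  case (pr a a' as as' b M)
  have las: "list_all2 (tpar L) as' (map (tdev L) as)" using pr.hyps(2) by (rule list_tpar_dev)
  have len: "length as' = length as" using pr.hyps(2) by (auto dest: list_all2_lengthD)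
  have ta: "tpar L a' (tdev L a)" using pr.hyps(1) by (rule tpar_dev)
  show ?case
  proof (cases a)
    case Zero
    then have a': "a' = Zero" using pr.hyps(1) tpar_Zero by blast
    show ?thesis
    proof (cases "b < length \<Psi> \<and> length as = length (cxs (\<Psi> ! b))")
      case True
      then show ?thesis using Zero a' las len by (auto intro!: xpar.pr0)
    next
      case False
      then show ?thesis using Zero a' las by (auto intro!: xpar.pr)
    qed
  next
    case (Sc t)
    then obtain t' where a': "a' = Sc t'" and tt: "tpar L t t'" using pr.hyps(1) tpar_Sc by blast
    have t': "tpar L t' (tdev L t)" using tt by (rule tpar_dev)
    show ?thesis
    proof (cases "b < length \<Psi> \<and> length as = length (cxs (\<Psi> ! b))")
      case True
      then show ?thesis using Sc a' las len t' by (auto intro!: xpar.prS)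
    next
      case False
      then show ?thesis using Sc a' las t' by (auto intro!: xpar.pr tpar.sc)
    qed
  qed (use pr.hyps las ta in \<open>auto intro!: xpar.pr\<close>)
next
  case (pr0 b as as' M)
  have "list_all2 (tpar L) as' (map (tdev L) as)" using pr0.hyps(3) by (rule list_tpar_dev)
  then show ?case using pr0 by (auto intro!: xpar_subst mk_subst_tpar)
next
  case (prS b as t t' as' M)
  have "list_all2 (tpar L) as' (map (tdev L) as)" using prS.hyps(4) by (rule list_tpar_dev)
  moreover have "tpar L t' (tdev L t)" using prS.hyps(3) by (rule tpar_dev)
  ultimately show ?case using prS by (auto intro!: xpar_subst mk_subst_tpar)
qed (auto intro!: xpar.intros fpar_dev uipar_dev bipar_dev spar_dev)


lemma list_all2_lstep_fpar: "lstep (fstep L) us us' \<Longrightarrow> list_all2 (fpar L) us us'"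
  using lstep_list_all2[of "fstep L" us us' "fpar L"] fstep_fpar fpar_refl by blast

lemma list_fpar_refl[simp]: "list_all2 (fpar L) xs xs" by (rule list_all2_refl) simp
lemma list_tpar_refl[simp]: "list_all2 (tpar L) xs xs" by (rule list_all2_refl) simp

lemma seq_step_spar: "seq_step L S S' \<Longrightarrow> spar L S S'"
  unfolding seq_step_def spar_def
  by (auto intro: list_all2_lstep_fpar list_all2_refl')

lemma xstep_xpar: "xstep L \<Psi> X X' \<Longrightarrow> xpar L \<Psi> X X'"
proof (induction rule: xstep.induct)
  case (ax A A') then show ?case by (intro xpar.ax fstep_fpar)
next
  case (pr_a a a' b M as) then show ?case by (intro xpar.pr tstep_tpar) auto
next
  case (pr_as as as' b M a) then show ?case by (intro xpar.pr list_all2_lstep_tpar) auto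
next
  case (pr_0 b as M)
  then show ?case by (intro xpar.pr0) auto
next
  case (pr_S b as t M)
  then show ?case by (intro xpar.prS) auto
next
  case (un_l as as' k bs m X) then show ?case by (intro xpar.un) (auto intro: list_all2_lstep_fpar)
next
  case (un_r bs bs' k as m X) then show ?case by (intro xpar.un) (auto intro: list_all2_lstep_fpar)
next
  case (un_m m m' k as bs X) then show ?case by (intro xpar.un) (auto intro: fstep_fpar)
next
  case (un_sub X X' r) then show ?case by (intro xpar.un) auto
next
  case (w_seq S S' X) then show ?case by (intro xpar.w seq_step_spar) auto
next
  case (w_sub X X' S) then show ?case by (intro xpar.w) auto
next
  case (plus1 X X' Y) then show ?case by (intro xpar.plus) auto
next
  case (plus2 Y Y' X) then show ?case by (intro xpar.plus) auto
next
  case (times_1 A A' k B m X Y) then show ?case by (intro xpar.times) (auto intro: fstep_fpar)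
next
  case (times_2 B B' k A m X Y) then show ?case by (intro xpar.times) (auto intro: fstep_fpar)
next
  case (times_m m m' k A B X Y) then show ?case by (intro xpar.times) (auto intro: fstep_fpar)
next
  case (times_s1 X X' r Y) then show ?case by (intro xpar.times) auto
next
  case (times_s2 Y Y' r X) then show ?case by (intro xpar.times) auto
qed

lemma list_fpar_rtc: "list_all2 (fpar L) us us' \<Longrightarrow> (lstep (fstep L))\<^sup>*\<^sup>* us us'"
  by (intro rtranclp_lstep) (auto elim: list_all2_mono intro: fpar_fstep)

lemma spar_rtc: "spar L S S' \<Longrightarrow> (seq_step L)\<^sup>*\<^sup>* S S'"
proof -
  assume a: "spar L S S'"
  obtain G D G' D' where S: "S = (G, D)" "S' = (G', D')" by (cases S; cases S') auto
  have 1: "(lstep (fstep L))\<^sup>*\<^sup>* G G'" and 2: "(lstep (fstep L))\<^sup>*\<^sup>* D D'"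
    using a S by (auto simp: spar_def intro: list_fpar_rtc)
  have "(seq_step L)\<^sup>*\<^sup>* (G, D) (G', D)"
    using rtc_ctx[of "lstep (fstep L)" "seq_step L" "\<lambda>x. (x, D)"] 1 by (auto simp: seq_step_def)
  moreover have "(seq_step L)\<^sup>*\<^sup>* (G', D) (G', D')"
    using rtc_ctx[of "lstep (fstep L)" "seq_step L" "\<lambda>x. (G', x)"] 2 by (auto simp: seq_step_def)
  ultimately show ?thesis using S by simp
qed

lemma xpar_xstep: "xpar L \<Psi> X X' \<Longrightarrow> (xstep L \<Psi>)\<^sup>*\<^sup>* X X'"
proof (induction rule: xpar.induct)
  case (ax A A')
  then show ?case using rtc_ctx[of "fstep L" "xstep L \<Psi>" PAx, OF xstep.ax] fpar_fstep by blast
next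
  case (pr a a' as as' b M)
  have "(xstep L \<Psi>)\<^sup>*\<^sup>* (Pr b M a as) (Pr b M a' as)"
    using rtc_ctx[of "tstep L" "xstep L \<Psi>" "\<lambda>x. Pr b M x as", OF xstep.pr_a] tpar_tstep pr by blast
  moreover have "(xstep L \<Psi>)\<^sup>*\<^sup>* (Pr b M a' as) (Pr b M a' as')"
    using rtc_ctx[of "lstep (tstep L)" "xstep L \<Psi>" "\<lambda>x. Pr b M a' x", OF xstep.pr_as] list_tpar_rtc pr by blast
  ultimately show ?case by simp
next
  case (pr0 b as as' M)
  have "(xstep L \<Psi>)\<^sup>*\<^sup>* (Pr b M Zero as) (Pr b M Zero as')"
    using rtc_ctx[of "lstep (tstep L)" "xstep L \<Psi>" "\<lambda>x. Pr b M Zero x", OF xstep.pr_as] list_tpar_rtc pr0 by blast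
  moreover have "xstep L \<Psi> (Pr b M Zero as') (subst_x (mk_subst (cxs (\<Psi> ! b)) as') (xi (cpi (\<Psi> ! b)) M))"
    using pr0 by (intro xstep.pr_0) (auto dest: list_all2_lengthD)
  ultimately show ?case by simp
next
  case (prS b as t t' as' M)
  have "(xstep L \<Psi>)\<^sup>*\<^sup>* (Pr b M (Sc t) as) (Pr b M (Sc t') as)"
    using rtc_ctx[of "tstep L" "xstep L \<Psi>" "\<lambda>x. Pr b M x as", OF xstep.pr_a] tpar_tstep prS
      tpar.sc by blast
  moreover have "(xstep L \<Psi>)\<^sup>*\<^sup>* (Pr b M (Sc t') as) (Pr b M (Sc t') as')"
    using rtc_ctx[of "lstep (tstep L)" "xstep L \<Psi>" "\<lambda>x. Pr b M (Sc t') x", OF xstep.pr_as] list_tpar_rtc prS by blast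
  moreover have "xstep L \<Psi> (Pr b M (Sc t') as') (subst_x (mk_subst (ck (\<Psi> ! b) # cxs (\<Psi> ! b)) (t' # as')) (xi (cnu (\<Psi> ! b)) M))"
    using prS by (intro xstep.pr_S) (auto dest: list_all2_lengthD)
  ultimately show ?case by simp
next
  case (un r r' X X')
  obtain k as bs m k' as' bs' m' where r: "r = UInf k as bs m" "r' = UInf k' as' bs' m'"
    by (cases r; cases r') auto
  with un.hyps(1) have h: "k' = k" "list_all2 (fpar L) as as'" "list_all2 (fpar L) bs bs'" "fpar L m m'" by auto
  have "(xstep L \<Psi>)\<^sup>*\<^sup>* (PUn (UInf k as bs m) X) (PUn (UInf k as' bs m) X)"
    using rtc_ctx[of "lstep (fstep L)" "xstep L \<Psi>" "\<lambda>x. PUn (UInf k x bs m) X", OF xstep.un_l] list_fpar_rtc h by blast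
  moreover have "(xstep L \<Psi>)\<^sup>*\<^sup>* (PUn (UInf k as' bs m) X) (PUn (UInf k as' bs' m) X)"
    using rtc_ctx[of "lstep (fstep L)" "xstep L \<Psi>" "\<lambda>x. PUn (UInf k as' x m) X", OF xstep.un_r] list_fpar_rtc h by blast
  moreover have "(xstep L \<Psi>)\<^sup>*\<^sup>* (PUn (UInf k as' bs' m) X) (PUn (UInf k as' bs' m') X)"
    using rtc_ctx[of "fstep L" "xstep L \<Psi>" "\<lambda>x. PUn (UInf k as' bs' x) X", OF xstep.un_m] fpar_fstep h by blast
  moreover have "(xstep L \<Psi>)\<^sup>*\<^sup>* (PUn (UInf k as' bs' m') X) (PUn (UInf k as' bs' m') X')"
    using rtc_ctx[of "xstep L \<Psi>" "xstep L \<Psi>" "\<lambda>x. PUn (UInf k as' bs' m') x", OF xstep.un_sub] un.IH by blast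
  ultimately show ?case using r h by simp
next
  case (w S S' X X')
  have "(xstep L \<Psi>)\<^sup>*\<^sup>* (PW S X) (PW S' X)"
    using rtc_ctx[of "seq_step L" "xstep L \<Psi>" "\<lambda>x. PW x X", OF xstep.w_seq] spar_rtc w by blast
  moreover have "(xstep L \<Psi>)\<^sup>*\<^sup>* (PW S' X) (PW S' X')"
    using rtc_ctx[of "xstep L \<Psi>" "xstep L \<Psi>" "\<lambda>x. PW S' x", OF xstep.w_sub] w by blast
  ultimately show ?case by simp
next
  case (plus X X' Y Y')
  have "(xstep L \<Psi>)\<^sup>*\<^sup>* (PPlus X Y) (PPlus X' Y)"
    using rtc_ctx[of "xstep L \<Psi>" "xstep L \<Psi>" "\<lambda>x. PPlus x Y", OF xstep.plus1] plus by blast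
  moreover have "(xstep L \<Psi>)\<^sup>*\<^sup>* (PPlus X' Y) (PPlus X' Y')"
    using rtc_ctx[of "xstep L \<Psi>" "xstep L \<Psi>" "\<lambda>x. PPlus X' x", OF xstep.plus2] plus by blast
  ultimately show ?case by simp
next
  case (times r r' X X' Y Y')
  obtain k A B m k' A' B' m' where r: "r = BInf k A B m" "r' = BInf k' A' B' m'"
    by (cases r; cases r') auto
  with times.hyps(1) have h: "k' = k" "fpar L A A'" "fpar L B B'" "fpar L m m'" by auto
  have "(xstep L \<Psi>)\<^sup>*\<^sup>* (PTimes (BInf k A B m) X Y) (PTimes (BInf k A' B m) X Y)"
    using rtc_ctx[of "fstep L" "xstep L \<Psi>" "\<lambda>x. PTimes (BInf k x B m) X Y", OF xstep.times_1] fpar_fstep h by blast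
  moreover have "(xstep L \<Psi>)\<^sup>*\<^sup>* (PTimes (BInf k A' B m) X Y) (PTimes (BInf k A' B' m) X Y)"
    using rtc_ctx[of "fstep L" "xstep L \<Psi>" "\<lambda>x. PTimes (BInf k A' x m) X Y", OF xstep.times_2] fpar_fstep h by blast
  moreover have "(xstep L \<Psi>)\<^sup>*\<^sup>* (PTimes (BInf k A' B' m) X Y) (PTimes (BInf k A' B' m') X Y)"
    using rtc_ctx[of "fstep L" "xstep L \<Psi>" "\<lambda>x. PTimes (BInf k A' B' x) X Y", OF xstep.times_m] fpar_fstep h by blast
  moreover have "(xstep L \<Psi>)\<^sup>*\<^sup>* (PTimes (BInf k A' B' m') X Y) (PTimes (BInf k A' B' m') X' Y)"
    using rtc_ctx[of "xstep L \<Psi>" "xstep L \<Psi>" "\<lambda>x. PTimes (BInf k A' B' m') x Y", OF xstep.times_s1] times by blast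
  moreover have "(xstep L \<Psi>)\<^sup>*\<^sup>* (PTimes (BInf k A' B' m') X' Y) (PTimes (BInf k A' B' m') X' Y')"
    using rtc_ctx[of "xstep L \<Psi>" "xstep L \<Psi>" "\<lambda>x. PTimes (BInf k A' B' m') X' x", OF xstep.times_s2] times by blast
  ultimately show ?case using r h by simp
qed

section \<open>Confluence\<close>

lemma xpar_diamond: "wf_lang L \<Longrightarrow> xpar L \<Psi> x a \<Longrightarrow> xpar L \<Psi> x b \<Longrightarrow> \<exists>c. xpar L \<Psi> a c \<and> xpar L \<Psi> b c"
  using xpar_dev by blast

lemma strip:
  assumes wf: "wf_lang L"
  shows "(xpar L \<Psi>)\<^sup>*\<^sup>* x b \<Longrightarrow> xpar L \<Psi> x a \<Longrightarrow> \<exists>c. (xpar L \<Psi>)\<^sup>*\<^sup>* a c \<and> xpar L \<Psi> b c"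
proof (induction arbitrary: a rule: rtranclp_induct)
  case base then show ?case by auto
next
  case (step y z)
  from step.IH[OF step.prems] obtain c where c: "(xpar L \<Psi>)\<^sup>*\<^sup>* a c" "xpar L \<Psi> y c" by blast
  from xpar_diamond[OF wf c(2) step.hyps(2)] obtain d where "xpar L \<Psi> c d" "xpar L \<Psi> z d" by blast
  then show ?case using c(1) by (auto intro: rtranclp.rtrancl_into_rtrancl)
qed

lemma diamond_confl:
  assumes wf: "wf_lang L"
  shows "(xpar L \<Psi>)\<^sup>*\<^sup>* x a \<Longrightarrow> (xpar L \<Psi>)\<^sup>*\<^sup>* x b \<Longrightarrow> \<exists>c. (xpar L \<Psi>)\<^sup>*\<^sup>* a c \<and> (xpar L \<Psi>)\<^sup>*\<^sup>* b c"
proof (induction arbitrary: b rule: rtranclp_induct)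
  case base then show ?case by auto
next
  case (step y z)
  from step.IH[OF step.prems] obtain c where c: "(xpar L \<Psi>)\<^sup>*\<^sup>* y c" "(xpar L \<Psi>)\<^sup>*\<^sup>* b c" by blast
  from strip[OF wf c(1) step.hyps(2)] obtain d where "(xpar L \<Psi>)\<^sup>*\<^sup>* z d" "xpar L \<Psi> c d" by blast
  then show ?case using c(2) by (auto intro: rtranclp.rtrancl_into_rtrancl)
qed

lemma rtc_sub: "(\<And>a b. P a b \<Longrightarrow> R\<^sup>*\<^sup>* a b) \<Longrightarrow> P\<^sup>*\<^sup>* x y \<Longrightarrow> R\<^sup>*\<^sup>* x y"
  by (erule rtranclp_induct) (auto intro: rtranclp_trans)

lemma xstep_confl:
  assumes "wf_lang L" "(xstep L \<Psi>)\<^sup>*\<^sup>* x a" "(xstep L \<Psi>)\<^sup>*\<^sup>* x b"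
  shows "\<exists>c. (xstep L \<Psi>)\<^sup>*\<^sup>* a c \<and> (xstep L \<Psi>)\<^sup>*\<^sup>* b c"
proof -
  have S1: "\<And>a b. xstep L \<Psi> a b \<Longrightarrow> (xpar L \<Psi>)\<^sup>*\<^sup>* a b" using xstep_xpar by blast
  have S2: "\<And>a b. xpar L \<Psi> a b \<Longrightarrow> (xstep L \<Psi>)\<^sup>*\<^sup>* a b" using xpar_xstep by blast
  have "(xpar L \<Psi>)\<^sup>*\<^sup>* x a" by (rule rtc_sub[OF S1 assms(2)])
  moreover have "(xpar L \<Psi>)\<^sup>*\<^sup>* x b" by (rule rtc_sub[OF S1 assms(3)])
  ultimately have "\<exists>c. (xpar L \<Psi>)\<^sup>*\<^sup>* a c \<and> (xpar L \<Psi>)\<^sup>*\<^sup>* b c" by (rule diamond_confl[OF assms(1)])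
  then obtain c where c: "(xpar L \<Psi>)\<^sup>*\<^sup>* a c" "(xpar L \<Psi>)\<^sup>*\<^sup>* b c" by blast
  show ?thesis using rtc_sub[OF S2 c(1)] rtc_sub[OF S2 c(2)] by blast
qed

lemma normal_rtc: "r\<^sup>*\<^sup>* a c \<Longrightarrow> \<not> (\<exists>Y. r a Y) \<Longrightarrow> a = c"
  by (induction rule: converse_rtranclp_induct) auto

lemma conv_join_x:
  assumes wf: "wf_lang L"
  shows "conv (xstep L \<Psi>) a b \<Longrightarrow> \<exists>c. (xstep L \<Psi>)\<^sup>*\<^sup>* a c \<and> (xstep L \<Psi>)\<^sup>*\<^sup>* b c"
  unfolding conv_def
proof (induction rule: rtranclp_induct)
  case base then show ?case by auto
next
  case (step y z)
  then obtain c where c: "(xstep L \<Psi>)\<^sup>*\<^sup>* a c" "(xstep L \<Psi>)\<^sup>*\<^sup>* y c" by blast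
  show ?case
  proof (cases "xstep L \<Psi> y z")
    case True
    have yz: "(xstep L \<Psi>)\<^sup>*\<^sup>* y z" using True by (rule r_into_rtranclp)
    obtain d where d: "(xstep L \<Psi>)\<^sup>*\<^sup>* c d" "(xstep L \<Psi>)\<^sup>*\<^sup>* z d"
      using xstep_confl[OF wf c(2) yz] by blast
    have "(xstep L \<Psi>)\<^sup>*\<^sup>* a d" using c(1) d(1) by (rule rtranclp_trans)
    then show ?thesis using d(2) by blast
  next
    case False
    then have "xstep L \<Psi> z y" using step.hyps(2) by blast
    then have "(xstep L \<Psi>)\<^sup>*\<^sup>* z c" using c(2) by (rule converse_rtranclp_into_rtranclp)
    then show ?thesis using c(1) by blast
  qed
qed

lemma normal_unique:
  assumes "wf_lang L" "conv (xstep L \<Psi>) a b" "\<not> (\<exists>Y. xstep L \<Psi> a Y)" "\<not> (\<exists>Y. xstep L \<Psi> b Y)"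
  shows "a = b"
proof -
  obtain c where c: "(xstep L \<Psi>)\<^sup>*\<^sup>* a c" "(xstep L \<Psi>)\<^sup>*\<^sup>* b c"
    using conv_join_x[OF assms(1,2)] by blast
  have "a = c" using c(1) assms(3) by (rule normal_rtc)
  moreover have "b = c" using c(2) assms(4) by (rule normal_rtc)
  ultimately show ?thesis by simp
qed



lemma subst_lift_comm: "subst_t (lift_t d \<circ> \<sigma>) (lift_t d t) = lift_t d (subst_t \<sigma> t)"
  by (induction t) auto

lemma subst_t_comp0: "subst_t \<sigma> (subst_t \<tau> t) = subst_t (\<lambda>v. subst_t \<sigma> (\<tau> v)) t"
proof (induction t)
  case (Fn g us)
  have "map (subst_t \<sigma>) (map (subst_t \<tau>) us) = map (subst_t (\<lambda>v. subst_t \<sigma> (\<tau> v))) us"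
    using Fn.IH by (induction us) auto
  then show ?case by simp
qed auto

lemma subst_t_comp: "subst_t \<sigma> (subst_t \<tau> t) = subst_t (subst_t \<sigma> \<circ> \<tau>) t"
  unfolding comp_def by (rule subst_t_comp0)

lemma subst_lift_comm': "subst_t (\<lambda>x. lift_t d (\<sigma> x)) (lift_t d t) = lift_t d (subst_t \<sigma> t)"
  using subst_lift_comm[of d \<sigma> t] by (simp add: comp_def)

lemma subst_f_comp0: "subst_f \<sigma> (subst_f \<tau> F) = subst_f (\<lambda>v. subst_t \<sigma> (\<tau> v)) F"
  by (induction F arbitrary: \<sigma> \<tau>) (simp_all add: subst_t_comp0 comp_def subst_lift_comm')

lemma subst_f_comp: "subst_f \<sigma> (subst_f \<tau> F) = subst_f (subst_t \<sigma> \<circ> \<tau>) F"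
  unfolding comp_def by (rule subst_f_comp0)

lemma subst_t_cong: "(\<And>v. v \<in> fv_t t \<Longrightarrow> \<sigma> v = \<sigma>' v) \<Longrightarrow> subst_t \<sigma> t = subst_t \<sigma>' t"
proof (induction t)
  case (Fn g us)
  have "subst_t \<sigma> u = subst_t \<sigma>' u" if u: "u \<in> set us" for u
  proof (rule Fn.IH[OF u])
    fix v assume "v \<in> fv_t u" then show "\<sigma> v = \<sigma>' v" using u by (intro Fn.prems) auto
  qed
  then show ?case by simp
next
  case (Sc u)
  have "subst_t \<sigma> u = subst_t \<sigma>' u" by (rule Sc.IH) (rule Sc.prems, simp)
  then show ?case by simp
next
  case (Fr v) then show ?case by simp
qed simp_all

lemma subst_f_cong: "(\<And>v. v \<in> fv_f F \<Longrightarrow> \<sigma> v = \<sigma>' v) \<Longrightarrow> subst_f \<sigma> F = subst_f \<sigma>' F"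
proof (induction F arbitrary: \<sigma> \<sigma>')
  case (Atom P us)
  have "subst_t \<sigma> u = subst_t \<sigma>' u" if u: "u \<in> set us" for u
  proof (rule subst_t_cong)
    fix v assume "v \<in> fv_t u" then show "\<sigma> v = \<sigma>' v" using u by (intro Atom.prems) auto
  qed
  then show ?case by simp
next
  case (Neg A)
  have "subst_f \<sigma> A = subst_f \<sigma>' A" by (rule Neg.IH) (rule Neg.prems, simp)
  then show ?case by simp
next
  case (Conj A B)
  have "subst_f \<sigma> A = subst_f \<sigma>' A" by (rule Conj.IH(1)) (rule Conj.prems, simp)
  moreover have "subst_f \<sigma> B = subst_f \<sigma>' B" by (rule Conj.IH(2)) (rule Conj.prems, simp)
  ultimately show ?case by simp
next
  case (Disj A B)
  have "subst_f \<sigma> A = subst_f \<sigma>' A" by (rule Disj.IH(1)) (rule Disj.prems, simp)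
  moreover have "subst_f \<sigma> B = subst_f \<sigma>' B" by (rule Disj.IH(2)) (rule Disj.prems, simp)
  ultimately show ?case by simp
next
  case (Imp A B)
  have "subst_f \<sigma> A = subst_f \<sigma>' A" by (rule Imp.IH(1)) (rule Imp.prems, simp)
  moreover have "subst_f \<sigma> B = subst_f \<sigma>' B" by (rule Imp.IH(2)) (rule Imp.prems, simp)
  ultimately show ?case by simp
next
  case (All s A)
  have "subst_f (lift_t 0 \<circ> \<sigma>) A = subst_f (lift_t 0 \<circ> \<sigma>') A"
  proof (rule All.IH)
    fix v assume "v \<in> fv_f A" then have "\<sigma> v = \<sigma>' v" by (intro All.prems) simp
    then show "(lift_t 0 \<circ> \<sigma>) v = (lift_t 0 \<circ> \<sigma>') v" by simp
  qed
  then show ?case by simp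
next
  case (Ex s A)
  have "subst_f (lift_t 0 \<circ> \<sigma>) A = subst_f (lift_t 0 \<circ> \<sigma>') A"
  proof (rule Ex.IH)
    fix v assume "v \<in> fv_f A" then have "\<sigma> v = \<sigma>' v" by (intro Ex.prems) simp
    then show "(lift_t 0 \<circ> \<sigma>) v = (lift_t 0 \<circ> \<sigma>') v" by simp
  qed
  then show ?case by simp
qed

lemma subst_seq_comp_cong:
  "(\<And>v. v \<in> fv_seq S \<Longrightarrow> subst_t \<sigma> (\<tau> v) = \<rho> v) \<Longrightarrow> subst_seq \<sigma> (subst_seq \<tau> S) = subst_seq \<rho> S"
  unfolding subst_seq_def fv_seq_def
  by (auto simp: subst_f_comp intro!: subst_f_cong; blast)

lemma subst_seq_cong:
  "(\<And>v. v \<in> fv_seq S \<Longrightarrow> \<sigma> v = \<rho> v) \<Longrightarrow> subst_seq \<sigma> S = subst_seq \<rho> S"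
  unfolding subst_seq_def fv_seq_def
  by (auto intro!: subst_f_cong; blast)

lemma mk_subst_notin: "v \<notin> set vs \<Longrightarrow> mk_subst vs ts v = Fr v"
proof (induction vs arbitrary: ts)
  case Nil then show ?case by (simp add: mk_subst_Nil1)
next
  case (Cons w ws) then show ?case by (cases ts) (auto simp: mk_subst_Cons mk_subst_Nil2)
qed

lemma subst_mk_subst: "length vs = length ts \<Longrightarrow> v \<in> set vs \<Longrightarrow>
   subst_t \<sigma> (mk_subst vs ts v) = mk_subst vs (map (subst_t \<sigma>) ts) v"
proof (induction vs arbitrary: ts)
  case Nil then show ?case by simp
next
  case (Cons w ws) then show ?case by (cases ts) (auto simp: mk_subst_Cons)
qed

lemma mk_subst_self: "mk_subst vs (map Fr vs) v = Fr v"
  by (induction vs) (auto simp: mk_subst_Nil1 mk_subst_Cons)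

lemma length_subst_seq[simp]: "length (fst (subst_seq \<sigma> S)) = length (fst S)" "length (snd (subst_seq \<sigma> S)) = length (snd S)"
  by (auto simp: subst_seq_def)

lemma ctx_map: "ctx (map f G) ls = map f (ctx G ls)"
  by (simp add: ctx_def nths_map)

lemma ucon_subst: "ucon (subst_ur \<sigma> r) (subst_seq \<sigma> S) = subst_seq \<sigma> (ucon r S)"
  by (cases r; cases S) (simp add: subst_ur_def subst_seq_def ctx_map)

lemma bcon_subst: "bcon (subst_br \<sigma> r) (subst_seq \<sigma> S1) (subst_seq \<sigma> S2) = subst_seq \<sigma> (bcon r S1 S2)"
  by (cases r; cases S1; cases S2) (auto simp: subst_br_def subst_seq_def ctx_map Let_def)

lemma concl_subst: "concl (subst_p \<sigma> p) = subst_seq \<sigma> (concl p)"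
  apply (induction p)
  apply (simp_all add: ucon_subst bcon_subst)
  apply (simp_all add: subst_seq_def)
  done

definition samelen :: "sequent \<Rightarrow> sequent \<Rightarrow> bool" where
  "samelen S S' \<longleftrightarrow> length (fst S) = length (fst S') \<and> length (snd S) = length (snd S')"

lemma samelen_subst[simp]: "samelen (subst_seq \<sigma> S) S" "samelen S (subst_seq \<sigma> S)"
  by (auto simp: samelen_def)

lemma premark_samelen: "samelen S S' \<Longrightarrow> premark d S M = premark d S' M"
  by (simp add: premark_def positions_def samelen_def)

lemma length_ctx: "length (ctx xs I) = card {i. i < length xs \<and> i \<in> - set I}"
  by (simp add: ctx_def length_nths)

lemma bdesc2_samelen: "samelen S S' \<Longrightarrow> bdesc2 r S = bdesc2 r S'"
  apply (cases r; cases S; cases S')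
  apply (rule ext)
  subgoal for k i j m G D G' D' p
    by (cases p) (auto simp: samelen_def length_ctx)
  done

lemma unmarked_subst: "unmarked (subst_seq \<sigma> S) M = subst_seq \<sigma> (unmarked S M)"
  by (auto simp: unmarked_def subst_seq_def)

fun uranges :: "urule \<Rightarrow> sequent \<Rightarrow> bool" where
  "uranges (URule k ls rs m) (G, D) = ((\<forall>i\<in>set ls. i < length G) \<and> (\<forall>i\<in>set rs. i < length D))"
fun branges :: "brule \<Rightarrow> sequent \<Rightarrow> sequent \<Rightarrow> bool" where
  "branges (BRule k i j m) (G1, D1) (G2, D2) =
     (i < length (if a1_left k then G1 else D1) \<and> j < length (if a2_left k then G2 else D2))"

lemma urule_ok_ranges: "urule_ok L r S \<Longrightarrow> uranges r S"
  by (cases r; cases S) (simp only: urule_ok.simps uranges.simps; blast)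
lemma brule_ok_ranges: "brule_ok L r S1 S2 \<Longrightarrow> branges r S1 S2"
  by (cases r; cases S1; cases S2) (simp only: brule_ok.simps branges.simps; blast)

lemma uranges_samelen: "samelen S S' \<Longrightarrow> uranges r S = uranges r S'"
  by (cases r; cases S; cases S') (auto simp: samelen_def)
lemma branges_samelen: "samelen S1 S1' \<Longrightarrow> samelen S2 S2' \<Longrightarrow> branges r S1 S2 = branges r S1' S2'"
  by (cases r; cases S1; cases S1'; cases S2; cases S2') (auto simp: samelen_def)

lemma uinf_of_subst: "uranges r S \<Longrightarrow> uinf_of (subst_ur \<sigma> r) (subst_seq \<sigma> S) = subst_ui \<sigma> (uinf_of r S)"
  by (cases r; cases S) (auto simp: subst_ur_def subst_seq_def)

lemma binf_of_subst: "branges r S1 S2 \<Longrightarrow>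
   binf_of (subst_br \<sigma> r) (subst_seq \<sigma> S1) (subst_seq \<sigma> S2) = subst_bi \<sigma> (binf_of r S1 S2)"
  by (cases r; cases S1; cases S2) (auto simp: subst_br_def subst_seq_def)

lemma ukind_subst[simp]: "ukind (subst_ur \<sigma> r) = ukind r" by (cases r) (auto simp: subst_ur_def)
lemma bkind_subst[simp]: "bkind (subst_br \<sigma> r) = bkind r" by (cases r) (auto simp: subst_br_def)
lemma udesc_subst0: "udesc (subst_ur \<sigma> r) x = udesc r x"
  by (cases r; cases x) (auto simp: subst_ur_def)
lemma bdesc1_subst0: "bdesc1 (subst_br \<sigma> r) x = bdesc1 r x"
  by (cases r; cases x) (auto simp: subst_br_def)
lemma bdesc2_subst0: "bdesc2 (subst_br \<sigma> r) S x = bdesc2 r S x"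
  by (cases r; cases S; cases x) (auto simp: subst_br_def)
lemma udesc_subst[simp]: "udesc (subst_ur \<sigma> r) = udesc r"
  by (rule ext) (rule udesc_subst0)
lemma bdesc1_subst[simp]: "bdesc1 (subst_br \<sigma> r) = bdesc1 r"
  by (rule ext) (rule bdesc1_subst0)
lemma bdesc2_subst[simp]: "bdesc2 (subst_br \<sigma> r) = bdesc2 r"
  by (rule ext)+ (rule bdesc2_subst0)

fun ranges :: "lkproof \<Rightarrow> bool" where
  "ranges (Ax A) = True"
| "ranges (Link b a as S) = True"
| "ranges (Unary r p) = (ranges p \<and> uranges r (concl p))"
| "ranges (Binary r p q) = (ranges p \<and> ranges q \<and> branges r (concl p) (concl q))"
| "ranges (ERule S p) = ranges p"

lemma valid_ranges: "valid L \<Psi> ok p \<Longrightarrow> ranges p"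
  by (induction p) (auto simp del: urule_ok.simps brule_ok.simps intro: urule_ok_ranges brule_ok_ranges)

lemma xi_subst: "ranges p \<Longrightarrow> xi (subst_p \<sigma> p) M = subst_x \<sigma> (xi p M)"
proof (induction p arbitrary: M)
  case (Unary r p)
  then show ?case
    by (simp add: concl_subst premark_samelen[OF samelen_subst(1)] uinf_of_subst Let_def)
next
  case (Binary r p q)
  then show ?case
    by (simp add: concl_subst premark_samelen[OF samelen_subst(1)] bdesc2_samelen[OF samelen_subst(1)]
        binf_of_subst unmarked_subst Let_def)
qed auto



definition fconv :: "lang \<Rightarrow> fm \<Rightarrow> fm \<Rightarrow> bool" where
  "fconv L = conv (fstep L)"

definition sconv :: "lang \<Rightarrow> sequent \<Rightarrow> sequent \<Rightarrow> bool" where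
  "sconv L S S' \<longleftrightarrow> list_all2 (fconv L) (fst S) (fst S') \<and> list_all2 (fconv L) (snd S) (snd S')"

lemma fconv_refl[simp]: "fconv L A A" by (simp add: fconv_def)
lemma fconv_sym: "fconv L A B \<Longrightarrow> fconv L B A" unfolding fconv_def by (rule conv_sym)
lemma fconv_trans: "fconv L A B \<Longrightarrow> fconv L B C \<Longrightarrow> fconv L A C" unfolding fconv_def by (rule conv_trans)

lemma list_fconv_refl[simp]: "list_all2 (fconv L) xs xs" by (rule list_all2_refl) simp

lemma list_all2_sym': "list_all2 R xs ys \<Longrightarrow> (\<And>a b. R a b \<Longrightarrow> R b a) \<Longrightarrow> list_all2 R ys xs"
  by (auto simp: list_all2_conv_all_nth)

lemma list_all2_trans': "list_all2 R xs ys \<Longrightarrow> list_all2 R ys zs \<Longrightarrow> (\<And>a b c. R a b \<Longrightarrow> R b c \<Longrightarrow> R a c) \<Longrightarrow> list_all2 R xs zs"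
  by (auto simp: list_all2_conv_all_nth)

lemma sconv_refl[simp]: "sconv L S S" by (simp add: sconv_def)
lemma sconv_sym: "sconv L S S' \<Longrightarrow> sconv L S' S"
  unfolding sconv_def using list_all2_sym'[of "fconv L"] fconv_sym by blast
lemma sconv_trans: "sconv L S S' \<Longrightarrow> sconv L S' S'' \<Longrightarrow> sconv L S S''"
  unfolding sconv_def using list_all2_trans'[of "fconv L"] fconv_trans by blast

lemma sconv_samelen: "sconv L S S' \<Longrightarrow> samelen S S'"
  by (auto simp: sconv_def samelen_def dest: list_all2_lengthD)

lemma lstep_fconv: "lstep (fstep L) xs ys \<Longrightarrow> list_all2 (fconv L) xs ys"
  using lstep_list_all2[of "fstep L" xs ys "fconv L"] by (simp add: fconv_def conv_step)

lemma seq_step_sconv: "seq_step L S S' \<Longrightarrow> sconv L S S'"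
  unfolding seq_step_def sconv_def using lstep_fconv by (metis list_fconv_refl)

lemma fpar_fconv: "fpar L A A' \<Longrightarrow> fconv L A A'"
  unfolding fconv_def by (rule rtranclp_conv) (rule fpar_fstep)

lemma spar_sconv: "spar L S S' \<Longrightarrow> sconv L S S'"
  unfolding spar_def sconv_def by (auto elim: list_all2_mono intro: fpar_fconv)

lemma nth_beyond: "length xs = length ys \<Longrightarrow> length xs \<le> i \<Longrightarrow> xs ! i = ys ! i"
proof (induction xs arbitrary: ys i)
  case Nil then show ?case by simp
next
  case (Cons x xs)
  then obtain y ys' where ys: "ys = y # ys'" by (cases ys) auto
  then obtain i' where i: "i = Suc i'" using Cons.prems by (cases i) auto
  show ?case using Cons.IH[of ys' i'] Cons.prems ys i by simp
qed

lemma nth_conv: "list_all2 (fconv L) xs ys \<Longrightarrow> fconv L (xs ! i) (ys ! i)"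
proof (cases "i < length xs")
  case True
  assume "list_all2 (fconv L) xs ys"
  then show ?thesis using True by (simp add: list_all2_nthD)
next
  case False
  assume a: "list_all2 (fconv L) xs ys"
  then have "length xs = length ys" by (rule list_all2_lengthD)
  then have "xs ! i = ys ! i" using False by (intro nth_beyond) auto
  then show ?thesis by simp
qed

lemma list_all2_nths: "list_all2 R xs ys \<Longrightarrow> list_all2 R (nths xs I) (nths ys I)"
proof (induction arbitrary: I rule: list_all2_induct)
  case Nil then show ?case by simp
next
  case (Cons x xs y ys)
  show ?case using Cons.hyps Cons.IH[of "{j. Suc j \<in> I}"] by (simp add: nths_Cons list_all2_appendI)
qed

lemma list_all2_ctx: "list_all2 R xs ys \<Longrightarrow> list_all2 R (ctx xs I) (ctx ys I)"
  unfolding ctx_def by (rule list_all2_nths)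

lemma ucon_sconv: "sconv L S S' \<Longrightarrow> sconv L (ucon r S) (ucon r S')"
  by (cases r; cases S; cases S') (auto simp: sconv_def intro!: list_all2_appendI list_all2_ctx)

lemma bcon_sconv: "sconv L S1 S1' \<Longrightarrow> sconv L S2 S2' \<Longrightarrow> sconv L (bcon r S1 S2) (bcon r S1' S2')"
  by (cases r; cases S1; cases S1'; cases S2; cases S2')
     (auto simp: sconv_def Let_def intro!: list_all2_appendI list_all2_ctx)

lemma ucon_m: "fconv L m m' \<Longrightarrow> sconv L (ucon (URule k ls rs m) S) (ucon (URule k ls rs m') S)"
  by (cases S) (auto simp: sconv_def intro!: list_all2_appendI)

lemma bcon_m: "fconv L m m' \<Longrightarrow> sconv L (bcon (BRule k i j m) S1 S2) (bcon (BRule k i j m') S1 S2)"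
  by (cases S1; cases S2) (auto simp: sconv_def Let_def intro!: list_all2_appendI)

lemma list_nth_conv: "list_all2 (fconv L) G G' \<Longrightarrow> list_all2 (fconv L) (map ((!) G) ls) (map ((!) G') ls)"
  by (intro list_all2_map_same nth_conv)

lemma unmarked_sconv: "sconv L S S' \<Longrightarrow> sconv L (unmarked S M) (unmarked S' M)"
proof -
  assume a: "sconv L S S'"
  then have l: "length (fst S') = length (fst S)" "length (snd S') = length (snd S)"
    by (auto simp: sconv_def dest: list_all2_lengthD)
  show ?thesis using a unfolding unmarked_def sconv_def l
    by (auto intro!: list_all2_map_same nth_conv)
qed

abbreviation xconv :: "lang \<Rightarrow> schema \<Rightarrow> pterm \<Rightarrow> pterm \<Rightarrow> bool" where
  "xconv L \<Psi> \<equiv> conv (xstep L \<Psi>)"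

lemma xconv_PUn: "xconv L \<Psi> X X' \<Longrightarrow> xconv L \<Psi> (PUn r X) (PUn r X')"
  by (rule conv_map[of "xstep L \<Psi>" "xstep L \<Psi>" "PUn r", OF xstep.un_sub])
lemma xconv_PW: "xconv L \<Psi> X X' \<Longrightarrow> xconv L \<Psi> (PW S X) (PW S X')"
  by (rule conv_map[of "xstep L \<Psi>" "xstep L \<Psi>" "PW S", OF xstep.w_sub])
lemma xconv_PPlus1: "xconv L \<Psi> X X' \<Longrightarrow> xconv L \<Psi> (PPlus X Y) (PPlus X' Y)"
  by (rule conv_map[of "xstep L \<Psi>" "xstep L \<Psi>" "\<lambda>x. PPlus x Y", OF xstep.plus1])
lemma xconv_PPlus2: "xconv L \<Psi> Y Y' \<Longrightarrow> xconv L \<Psi> (PPlus X Y) (PPlus X Y')"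
  by (rule conv_map[of "xstep L \<Psi>" "xstep L \<Psi>" "\<lambda>x. PPlus X x", OF xstep.plus2])
lemma xconv_PTimes1: "xconv L \<Psi> X X' \<Longrightarrow> xconv L \<Psi> (PTimes r X Y) (PTimes r X' Y)"
  by (rule conv_map[of "xstep L \<Psi>" "xstep L \<Psi>" "\<lambda>x. PTimes r x Y", OF xstep.times_s1])
lemma xconv_PTimes2: "xconv L \<Psi> Y Y' \<Longrightarrow> xconv L \<Psi> (PTimes r X Y) (PTimes r X Y')"
  by (rule conv_map[of "xstep L \<Psi>" "xstep L \<Psi>" "\<lambda>x. PTimes r X x", OF xstep.times_s2])

lemma xconv_UInf:
  assumes "list_all2 (fconv L) as as'" "list_all2 (fconv L) bs bs'" "fconv L m m'"
  shows "xconv L \<Psi> (PUn (UInf k as bs m) X) (PUn (UInf k as' bs' m') X)"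
proof -
  have 1: "xconv L \<Psi> (PUn (UInf k as bs m) X) (PUn (UInf k as' bs m) X)"
    using conv_map[of "lstep (fstep L)" "xstep L \<Psi>" "\<lambda>x. PUn (UInf k x bs m) X", OF xstep.un_l]
      conv_lstep[of "fstep L"] assms(1) by (simp add: fconv_def)
  have 2: "xconv L \<Psi> (PUn (UInf k as' bs m) X) (PUn (UInf k as' bs' m) X)"
    using conv_map[of "lstep (fstep L)" "xstep L \<Psi>" "\<lambda>x. PUn (UInf k as' x m) X", OF xstep.un_r]
      conv_lstep[of "fstep L"] assms(2) by (simp add: fconv_def)
  have 3: "xconv L \<Psi> (PUn (UInf k as' bs' m) X) (PUn (UInf k as' bs' m') X)"
    using conv_map[of "fstep L" "xstep L \<Psi>" "\<lambda>x. PUn (UInf k as' bs' x) X", OF xstep.un_m]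
      assms(3) by (simp add: fconv_def)
  show ?thesis using 1 2 3 by (meson conv_trans)
qed

lemma xconv_BInf:
  assumes "fconv L A A'" "fconv L B B'" "fconv L m m'"
  shows "xconv L \<Psi> (PTimes (BInf k A B m) X Y) (PTimes (BInf k A' B' m') X Y)"
proof -
  have 1: "xconv L \<Psi> (PTimes (BInf k A B m) X Y) (PTimes (BInf k A' B m) X Y)"
    using conv_map[of "fstep L" "xstep L \<Psi>" "\<lambda>x. PTimes (BInf k x B m) X Y", OF xstep.times_1]
      assms(1) by (simp add: fconv_def)
  have 2: "xconv L \<Psi> (PTimes (BInf k A' B m) X Y) (PTimes (BInf k A' B' m) X Y)"
    using conv_map[of "fstep L" "xstep L \<Psi>" "\<lambda>x. PTimes (BInf k A' x m) X Y", OF xstep.times_2]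
      assms(2) by (simp add: fconv_def)
  have 3: "xconv L \<Psi> (PTimes (BInf k A' B' m) X Y) (PTimes (BInf k A' B' m') X Y)"
    using conv_map[of "fstep L" "xstep L \<Psi>" "\<lambda>x. PTimes (BInf k A' B' x) X Y", OF xstep.times_m]
      assms(3) by (simp add: fconv_def)
  show ?thesis using 1 2 3 by (meson conv_trans)
qed

lemma xconv_PW_seq: "sconv L S S' \<Longrightarrow> xconv L \<Psi> (PW S X) (PW S' X)"
proof -
  assume a: "sconv L S S'"
  obtain G D G' D' where S: "S = (G, D)" "S' = (G', D')" by (cases S; cases S') auto
  have c1: "conv (lstep (fstep L)) G G'" and c2: "conv (lstep (fstep L)) D D'"
    using a S by (auto simp: sconv_def fconv_def intro: conv_lstep)
  have "conv (seq_step L) (G, D) (G', D)"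
    using conv_map[of "lstep (fstep L)" "seq_step L" "\<lambda>x. (x, D)"] c1 by (auto simp: seq_step_def)
  moreover have "conv (seq_step L) (G', D) (G', D')"
    using conv_map[of "lstep (fstep L)" "seq_step L" "\<lambda>x. (G', x)"] c2 by (auto simp: seq_step_def)
  ultimately have "conv (seq_step L) S S'" using S by (auto intro: conv_trans)
  then show ?thesis using conv_map[of "seq_step L" "xstep L \<Psi>" "\<lambda>x. PW x X"] xstep.w_seq by blast
qed

lemma uinf_of_xconv: "sconv L S S' \<Longrightarrow> xconv L \<Psi> (PUn (uinf_of r S) X) (PUn (uinf_of r S') X)"
  by (cases r; cases S; cases S') (auto simp: sconv_def intro!: xconv_UInf list_nth_conv)

lemma binf_of_xconv: "sconv L S1 S1' \<Longrightarrow> sconv L S2 S2' \<Longrightarrow>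
   xconv L \<Psi> (PTimes (binf_of r S1 S2) X Y) (PTimes (binf_of r S1' S2') X Y)"
  by (cases r; cases S1; cases S1'; cases S2; cases S2') (auto simp: sconv_def intro!: xconv_BInf nth_conv)


section \<open>Invariant\<close>

definition canon :: "schema \<Rightarrow> nat \<Rightarrow> trm \<Rightarrow> trm list \<Rightarrow> sequent" where
  "canon \<Psi> b a as = subst_seq (mk_subst (cn (\<Psi> ! b) # cxs (\<Psi> ! b)) (a # as)) (cseq (\<Psi> ! b))"

fun pinv :: "lang \<Rightarrow> schema \<Rightarrow> lkproof \<Rightarrow> bool" where
  "pinv L \<Psi> (Ax A) = True"
| "pinv L \<Psi> (Link b a as S) = (b < length \<Psi> \<and> length as = length (cxs (\<Psi> ! b)) \<and> sconv L S (canon \<Psi> b a as))"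
| "pinv L \<Psi> (Unary r p) = (pinv L \<Psi> p \<and> uranges r (concl p))"
| "pinv L \<Psi> (Binary r p q) = (pinv L \<Psi> p \<and> pinv L \<Psi> q \<and> branges r (concl p) (concl q))"
| "pinv L \<Psi> (ERule S p) = pinv L \<Psi> p"

lemma canon_zero:
  assumes "concl (cpi c) = subst_seq (mk_subst [cn c] [Zero]) (cseq c)"
  shows "subst_seq (mk_subst (cxs c) as) (concl (cpi c)) = subst_seq (mk_subst (cn c # cxs c) (Zero # as)) (cseq c)"
  unfolding assms
  by (rule subst_seq_comp_cong) (auto simp: mk_subst_Cons mk_subst_Nil1)

lemma canon_succ:
  assumes "concl (cnu c) = subst_seq (mk_subst [cn c] [Sc (Fr (ck c))]) (cseq c)"
    and "fv_seq (cseq c) \<subseteq> set (cn c # cxs c)" and "ck c \<notin> set (cxs c)"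
  shows "subst_seq (mk_subst (ck c # cxs c) (t # as)) (concl (cnu c)) = subst_seq (mk_subst (cn c # cxs c) (Sc t # as)) (cseq c)"
  unfolding assms(1)
proof (rule subst_seq_comp_cong)
  fix v assume v: "v \<in> fv_seq (cseq c)"
  show "subst_t (mk_subst (ck c # cxs c) (t # as)) (mk_subst [cn c] [Sc (Fr (ck c))] v) =
        mk_subst (cn c # cxs c) (Sc t # as) v"
  proof (cases "v = cn c")
    case True then show ?thesis by (simp add: mk_subst_Cons)
  next
    case False
    then have "v \<in> set (cxs c)" using v assms(2) by auto
    then have "v \<noteq> ck c" using assms(3) by auto
    then show ?thesis using False by (simp add: mk_subst_Cons mk_subst_Nil1)
  qed
qed

lemma canon_subst:
  assumes "fv_seq (cseq (\<Psi> ! b)) \<subseteq> set (cn (\<Psi> ! b) # cxs (\<Psi> ! b))" "length as = length (cxs (\<Psi> ! b))"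
  shows "subst_seq \<sigma> (canon \<Psi> b a as) = canon \<Psi> b (subst_t \<sigma> a) (map (subst_t \<sigma>) as)"
  unfolding canon_def
proof (rule subst_seq_comp_cong)
  fix v assume "v \<in> fv_seq (cseq (\<Psi> ! b))"
  then have "v \<in> set (cn (\<Psi> ! b) # cxs (\<Psi> ! b))" using assms(1) by auto
  then show "subst_t \<sigma> (mk_subst (cn (\<Psi> ! b) # cxs (\<Psi> ! b)) (a # as) v) =
      mk_subst (cn (\<Psi> ! b) # cxs (\<Psi> ! b)) (subst_t \<sigma> a # map (subst_t \<sigma>) as) v"
    using subst_mk_subst[of "cn (\<Psi> ! b) # cxs (\<Psi> ! b)" "a # as" v \<sigma>] assms(2) by simp
qed

lemma canon_tpar:
  assumes "wf_lang L" "list_all2 (tpar L) (a # as) (a' # as')"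
  shows "sconv L (canon \<Psi> b a as) (canon \<Psi> b a' as')"
proof -
  have "\<And>v. tpar L (mk_subst (cn (\<Psi> ! b) # cxs (\<Psi> ! b)) (a # as) v) (mk_subst (cn (\<Psi> ! b) # cxs (\<Psi> ! b)) (a' # as') v)"
    using assms(2) by (rule mk_subst_tpar)
  then have "spar L (canon \<Psi> b a as) (canon \<Psi> b a' as')"
    unfolding canon_def spar_def subst_seq_def using assms(1) by (auto intro!: list_fpar_subst)
  then show ?thesis by (rule spar_sconv)
qed

lemma schema_comp: "is_schema L \<Psi> \<Longrightarrow> b < length \<Psi> \<Longrightarrow> comp_ok L \<Psi> b (\<Psi> ! b)"
  by (simp add: is_schema_def)

lemma uranges_subst[simp]: "uranges (subst_ur \<sigma> r) S = uranges r S"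
  by (cases r; cases S) (simp add: subst_ur_def)
lemma branges_subst[simp]: "branges (subst_br \<sigma> r) S1 S2 = branges r S1 S2"
  by (cases r; cases S1; cases S2) (simp add: subst_br_def)

lemma inv_subst_valid: "is_schema L \<Psi> \<Longrightarrow> valid L \<Psi> ok p \<Longrightarrow> pinv L \<Psi> (subst_p \<sigma> p)"
proof (induction p)
  case (Ax A) then show ?case by simp
next
  case (Link b a as S)
  then have lk: "link_ok L \<Psi> b a as S" by simp
  then have b: "b < length \<Psi>" and S: "S = canon \<Psi> b a as"
    and m: "map (sort_of L []) as = map (Some \<circ> snd) (cxs (\<Psi> ! b))"
    by (auto simp: link_ok_def canon_def)
  have len: "length as = length (cxs (\<Psi> ! b))" using arg_cong[OF m, of length] by simp
  have fv: "fv_seq (cseq (\<Psi> ! b)) \<subseteq> set (cn (\<Psi> ! b) # cxs (\<Psi> ! b))"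
    using schema_comp[OF Link.prems(1) b] by (simp add: comp_ok_def)
  have "subst_seq \<sigma> S = canon \<Psi> b (subst_t \<sigma> a) (map (subst_t \<sigma>) as)"
    using canon_subst[OF fv len] S by simp
  then show ?case using b len by simp
next
  case (Unary r p)
  then have v: "valid L \<Psi> ok p" and u: "urule_ok L r (concl p)" by simp_all
  have "uranges r (concl p)" using u by (rule urule_ok_ranges)
  then have "uranges (subst_ur \<sigma> r) (concl (subst_p \<sigma> p))"
    using uranges_samelen[OF samelen_subst(1)] by (simp add: concl_subst)
  then show ?case using Unary.IH[OF Unary.prems(1) v] by simp
next
  case (Binary r p q)
  then have v: "valid L \<Psi> ok p" "valid L \<Psi> ok q" and u: "brule_ok L r (concl p) (concl q)" by simp_all
  have "branges r (concl p) (concl q)" using u by (rule brule_ok_ranges)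
  then have "branges (subst_br \<sigma> r) (concl (subst_p \<sigma> p)) (concl (subst_p \<sigma> q))"
    using branges_samelen[OF samelen_subst(1) samelen_subst(1)] by (simp add: concl_subst)
  then show ?case using Binary.IH(1)[OF Binary.prems(1) v(1)] Binary.IH(2)[OF Binary.prems(1) v(2)] by simp
next
  case (ERule S p)
  then have v: "valid L \<Psi> ok p" by simp
  then show ?case using ERule.IH[OF ERule.prems(1) v] by simp
qed

lemma xi_Unary: "xi (Unary r p) M = (if mpos (ukind r) \<in> M then xi p (premark (udesc r) (concl p) M)
   else PUn (uinf_of r (concl p)) (xi p (premark (udesc r) (concl p) M)))"
  by (simp add: Let_def)

lemma xi_Binary: "xi (Binary r p q) M =
  (if bkind r = Cut \<or> mpos (bkind r) \<in> M
   then PPlus (PW (unmarked (concl q) (premark (bdesc2 r (concl p)) (concl q) M)) (xi p (premark (bdesc1 r) (concl p) M)))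
              (PW (unmarked (concl p) (premark (bdesc1 r) (concl p) M)) (xi q (premark (bdesc2 r (concl p)) (concl q) M)))
   else PTimes (binf_of r (concl p) (concl q)) (xi p (premark (bdesc1 r) (concl p) M)) (xi q (premark (bdesc2 r (concl p)) (concl q) M)))"
  by (simp add: Let_def)

lemma udesc_m: "udesc (URule k ls rs m) = udesc (URule k ls rs m')"
  by (rule ext) (case_tac x, simp_all)
lemma bdesc1_m: "bdesc1 (BRule k i j m) = bdesc1 (BRule k i j m')"
  by (rule ext) (case_tac x, simp_all)
lemma bdesc2_m: "bdesc2 (BRule k i j m) = bdesc2 (BRule k i j m')"
  by (rule ext)+ (case_tac x; case_tac xa, simp_all)


section \<open>Simulation\<close>

lemma wf_of_schema: "is_schema L \<Psi> \<Longrightarrow> wf_lang L" by (simp add: is_schema_def)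

lemma sim:
  "pstep L \<Psi> p p' \<Longrightarrow> is_schema L \<Psi> \<Longrightarrow> pinv L \<Psi> p \<Longrightarrow>
   pinv L \<Psi> p' \<and> sconv L (concl p) (concl p') \<and> (\<forall>M. xconv L \<Psi> (xi p M) (xi p' M))"
proof (induction rule: pstep.induct)
  case (ax A A')
  have f: "fconv L A A'" using ax.hyps by (simp add: fconv_def conv_step)
  have "sconv L ([A], [A]) ([A'], [A'])" using f by (simp add: sconv_def)
  moreover have "xconv L \<Psi> (PAx A) (PAx A')" using ax.hyps by (intro conv_step xstep.ax)
  ultimately show ?case by simp
next
  case (link_a a a' b as S)
  have wf: "wf_lang L" using link_a.prems(1) by (rule wf_of_schema)
  have "list_all2 (tpar L) (a # as) (a' # as)" using link_a.hyps by (auto intro: tstep_tpar)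
  then have "sconv L (canon \<Psi> b a as) (canon \<Psi> b a' as)" by (rule canon_tpar[OF wf])
  then have "sconv L S (canon \<Psi> b a' as)" using link_a.prems(2) by (auto intro: sconv_trans)
  moreover have "\<And>M. xconv L \<Psi> (Pr b M a as) (Pr b M a' as)" using link_a.hyps by (intro conv_step xstep.pr_a)
  ultimately show ?case using link_a.prems(2) by simp
next
  case (link_as as as' b a S)
  have wf: "wf_lang L" using link_as.prems(1) by (rule wf_of_schema)
  have "list_all2 (tpar L) (a # as) (a # as')" using link_as.hyps by (auto intro: list_all2_lstep_tpar)
  then have "sconv L (canon \<Psi> b a as) (canon \<Psi> b a as')" by (rule canon_tpar[OF wf])
  then have "sconv L S (canon \<Psi> b a as')" using link_as.prems(2) by (auto intro: sconv_trans)
  moreover have "length as' = length as" using link_as.hyps by (simp add: lstep_length)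
  moreover have "\<And>M. xconv L \<Psi> (Pr b M a as) (Pr b M a as')" using link_as.hyps by (intro conv_step xstep.pr_as)
  ultimately show ?case using link_as.prems(2) by simp
next
  case (link_S S S' b a as)
  have ss: "sconv L S S'" using link_S.hyps by (rule seq_step_sconv)
  then have "sconv L S' (canon \<Psi> b a as)" using link_S.prems(2) by (auto intro: sconv_trans sconv_sym)
  then show ?case using link_S.prems(2) ss by simp
next
  case (link_0 b as S)
  let ?c = "\<Psi> ! b" and ?\<sigma> = "mk_subst (cxs (\<Psi> ! b)) as"
  have co: "comp_ok L \<Psi> b ?c" using schema_comp[OF link_0.prems(1) link_0.hyps(1)] .
  then have v: "valid L \<Psi> (\<lambda>\<gamma> a. b < \<gamma> \<and> fv_t a \<subseteq> {ck ?c}) (cpi ?c)"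
    and cc: "concl (cpi ?c) = subst_seq (mk_subst [cn ?c] [Zero]) (cseq ?c)"
    by (simp_all add: comp_ok_def)
  have i1: "pinv L \<Psi> (subst_p ?\<sigma> (cpi ?c))" by (rule inv_subst_valid[OF link_0.prems(1) v])
  have "concl (subst_p ?\<sigma> (cpi ?c)) = canon \<Psi> b Zero as"
    unfolding concl_subst canon_def by (rule canon_zero[OF cc])
  then have i2: "sconv L (concl (Link b Zero as S)) (concl (subst_p ?\<sigma> (cpi ?c)))"
    using link_0.prems(2) by simp
  have i3: "xconv L \<Psi> (xi (Link b Zero as S) M) (xi (subst_p ?\<sigma> (cpi ?c)) M)" for M
  proof -
    have "xi (subst_p ?\<sigma> (cpi ?c)) M = subst_x ?\<sigma> (xi (cpi ?c) M)"
      by (rule xi_subst[OF valid_ranges[OF v]])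
    then show ?thesis using link_0.hyps by (auto intro!: conv_step xstep.pr_0)
  qed
  show ?case using i1 i2 i3 by blast
next
  case (link_S' b as t S)
  let ?c = "\<Psi> ! b" and ?\<sigma> = "mk_subst (ck (\<Psi> ! b) # cxs (\<Psi> ! b)) (t # as)"
  have co: "comp_ok L \<Psi> b ?c" using schema_comp[OF link_S'.prems(1) link_S'.hyps(1)] .
  then have v: "valid L \<Psi> (\<lambda>\<gamma> a. (b < \<gamma> \<and> fv_t a \<subseteq> {ck ?c}) \<or> (\<gamma> = b \<and> a = Fr (ck ?c))) (cnu ?c)"
    and cc: "concl (cnu ?c) = subst_seq (mk_subst [cn ?c] [Sc (Fr (ck ?c))]) (cseq ?c)"
    and fv: "fv_seq (cseq ?c) \<subseteq> set (cn ?c # cxs ?c)" and ckn: "ck ?c \<notin> set (cxs ?c)"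
    by (simp_all add: comp_ok_def)
  have i1: "pinv L \<Psi> (subst_p ?\<sigma> (cnu ?c))" by (rule inv_subst_valid[OF link_S'.prems(1) v])
  have "concl (subst_p ?\<sigma> (cnu ?c)) = canon \<Psi> b (Sc t) as"
    unfolding concl_subst canon_def by (rule canon_succ[OF cc fv ckn])
  then have i2: "sconv L (concl (Link b (Sc t) as S)) (concl (subst_p ?\<sigma> (cnu ?c)))"
    using link_S'.prems(2) by simp
  have i3: "xconv L \<Psi> (xi (Link b (Sc t) as S) M) (xi (subst_p ?\<sigma> (cnu ?c)) M)" for M
  proof -
    have "xi (subst_p ?\<sigma> (cnu ?c)) M = subst_x ?\<sigma> (xi (cnu ?c) M)"
      by (rule xi_subst[OF valid_ranges[OF v]])
    then show ?thesis using link_S'.hyps by (auto intro!: conv_step xstep.pr_S)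
  qed
  show ?case using i1 i2 i3 by blast
next
  case (u_rule m m' k ls rs p)
  have f: "fconv L m m'" using u_rule.hyps by (simp add: fconv_def conv_step)
  have i1: "pinv L \<Psi> (Unary (URule k ls rs m') p)" using u_rule.prems(2) by (cases "concl p") simp
  have i2: "sconv L (concl (Unary (URule k ls rs m) p)) (concl (Unary (URule k ls rs m') p))"
    using ucon_m[OF f] by simp
  have i3: "xconv L \<Psi> (xi (Unary (URule k ls rs m) p) M) (xi (Unary (URule k ls rs m') p) M)" for M
  proof (cases "mpos k \<in> M")
    case True then show ?thesis by (simp only: xi_Unary ukind.simps udesc_m[of k ls rs m m'] if_True) simp
  next
    case False
    obtain G D where cp: "concl p = (G, D)" by (cases "concl p") auto
    have "xconv L \<Psi> (PUn (UInf k (map ((!) G) ls) (map ((!) D) rs) m) X) (PUn (UInf k (map ((!) G) ls) (map ((!) D) rs) m') X)" for X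
      using u_rule.hyps by (intro conv_step xstep.un_m)
    then show ?thesis using False cp by (simp only: xi_Unary ukind.simps udesc_m[of k ls rs m m'] if_False uinf_of.simps)
  qed
  show ?case using i1 i2 i3 by blast
next
  case (u_sub p p' r)
  from u_sub.prems(2) have ip: "pinv L \<Psi> p" and ur: "uranges r (concl p)" by simp_all
  from u_sub.IH[OF u_sub.prems(1) ip] have ip': "pinv L \<Psi> p'" and sc: "sconv L (concl p) (concl p')"
    and xc: "\<forall>M. xconv L \<Psi> (xi p M) (xi p' M)" by auto
  have sl: "samelen (concl p) (concl p')" using sc by (rule sconv_samelen)
  have i1: "pinv L \<Psi> (Unary r p')" using ip' ur uranges_samelen[OF sl] by simp
  have i2: "sconv L (concl (Unary r p)) (concl (Unary r p'))" using ucon_sconv[OF sc] by simp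
  have i3: "xconv L \<Psi> (xi (Unary r p) M) (xi (Unary r p') M)" for M
  proof -
    define M' where "M' = premark (udesc r) (concl p) M"
    have pm: "premark (udesc r) (concl p') M = M'" using premark_samelen[OF sl] M'_def by simp
    have x1: "xconv L \<Psi> (xi p M') (xi p' M')" using xc by blast
    show ?thesis
    proof (cases "mpos (ukind r) \<in> M")
      case True
      then show ?thesis using x1 pm unfolding xi_Unary M'_def[symmetric] by simp
    next
      case False
      have "xconv L \<Psi> (PUn (uinf_of r (concl p)) (xi p M')) (PUn (uinf_of r (concl p)) (xi p' M'))"
        by (rule xconv_PUn[OF x1])
      moreover have "xconv L \<Psi> (PUn (uinf_of r (concl p)) (xi p' M')) (PUn (uinf_of r (concl p')) (xi p' M'))"
        by (rule uinf_of_xconv[OF sc])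
      ultimately have "xconv L \<Psi> (PUn (uinf_of r (concl p)) (xi p M')) (PUn (uinf_of r (concl p')) (xi p' M'))"
        by (rule conv_trans)
      then show ?thesis using False pm unfolding xi_Unary M'_def[symmetric] by simp
    qed
  qed
  show ?case using i1 i2 i3 by blast
next
  case (b_rule m m' k i j p q)
  have f: "fconv L m m'" using b_rule.hyps by (simp add: fconv_def conv_step)
  have i1: "pinv L \<Psi> (Binary (BRule k i j m') p q)" using b_rule.prems(2)
    by (cases "concl p"; cases "concl q") simp
  have i2: "sconv L (concl (Binary (BRule k i j m) p q)) (concl (Binary (BRule k i j m') p q))"
    using bcon_m[OF f] by simp
  have i3: "xconv L \<Psi> (xi (Binary (BRule k i j m) p q) M) (xi (Binary (BRule k i j m') p q) M)" for M
  proof (cases "k = Cut \<or> mpos k \<in> M")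
    case True then show ?thesis
      by (simp only: xi_Binary bkind.simps bdesc1_m[of k i j m m'] bdesc2_m[of k i j m m'] if_True) simp
  next
    case False
    obtain G1 D1 G2 D2 where cp: "concl p = (G1, D1)" "concl q = (G2, D2)" by (cases "concl p"; cases "concl q") auto
    have "xconv L \<Psi> (PTimes (BInf k A B m) X Y) (PTimes (BInf k A B m') X Y)" for A B X Y
      using b_rule.hyps by (intro conv_step xstep.times_m)
    then show ?thesis using False cp
      by (simp only: xi_Binary bkind.simps bdesc1_m[of k i j m m'] bdesc2_m[of k i j m m'] if_False binf_of.simps)
  qed
  show ?case using i1 i2 i3 by blast
next
  case (b_sub1 p p' r q)
  from b_sub1.prems(2) have ip: "pinv L \<Psi> p" and iq: "pinv L \<Psi> q" and br: "branges r (concl p) (concl q)" by simp_all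
  from b_sub1.IH[OF b_sub1.prems(1) ip] have ip': "pinv L \<Psi> p'" and sc: "sconv L (concl p) (concl p')"
    and xc: "\<forall>M. xconv L \<Psi> (xi p M) (xi p' M)" by auto
  have sl: "samelen (concl p) (concl p')" using sc by (rule sconv_samelen)
  have sq: "samelen (concl q) (concl q)" by (simp add: samelen_def)
  have i1: "pinv L \<Psi> (Binary r p' q)" using ip' iq br branges_samelen[OF sl sq] by simp
  have i2: "sconv L (concl (Binary r p q)) (concl (Binary r p' q))" using bcon_sconv[OF sc sconv_refl] by simp
  have i3: "xconv L \<Psi> (xi (Binary r p q) M) (xi (Binary r p' q) M)" for M
  proof -
    define M1 where "M1 = premark (bdesc1 r) (concl p) M"
    define M2 where "M2 = premark (bdesc2 r (concl p)) (concl q) M"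
    have pm1: "premark (bdesc1 r) (concl p') M = M1" using premark_samelen[OF sl] M1_def by simp
    have pm2: "premark (bdesc2 r (concl p')) (concl q) M = M2" using bdesc2_samelen[OF sl] M2_def by simp
    have x1: "xconv L \<Psi> (xi p M1) (xi p' M1)" using xc by blast
    show ?thesis
    proof (cases "bkind r = Cut \<or> mpos (bkind r) \<in> M")
      case True
      have a: "xconv L \<Psi> (PPlus (PW (unmarked (concl q) M2) (xi p M1)) (PW (unmarked (concl p) M1) (xi q M2)))
                         (PPlus (PW (unmarked (concl q) M2) (xi p' M1)) (PW (unmarked (concl p) M1) (xi q M2)))"
        by (rule xconv_PPlus1[OF xconv_PW[OF x1]])
      have b: "xconv L \<Psi> (PPlus (PW (unmarked (concl q) M2) (xi p' M1)) (PW (unmarked (concl p) M1) (xi q M2)))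
                         (PPlus (PW (unmarked (concl q) M2) (xi p' M1)) (PW (unmarked (concl p') M1) (xi q M2)))"
        by (rule xconv_PPlus2[OF xconv_PW_seq[OF unmarked_sconv[OF sc]]])
      show ?thesis using conv_trans[OF a b] True pm1 pm2 unfolding xi_Binary M1_def[symmetric] M2_def[symmetric] by simp
    next
      case False
      have a: "xconv L \<Psi> (PTimes (binf_of r (concl p) (concl q)) (xi p M1) (xi q M2))
                         (PTimes (binf_of r (concl p) (concl q)) (xi p' M1) (xi q M2))"
        by (rule xconv_PTimes1[OF x1])
      have b: "xconv L \<Psi> (PTimes (binf_of r (concl p) (concl q)) (xi p' M1) (xi q M2))
                         (PTimes (binf_of r (concl p') (concl q)) (xi p' M1) (xi q M2))"
        by (rule binf_of_xconv[OF sc sconv_refl])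
      show ?thesis using conv_trans[OF a b] False pm1 pm2 unfolding xi_Binary M1_def[symmetric] M2_def[symmetric] by simp
    qed
  qed
  show ?case using i1 i2 i3 by blast
next
  case (b_sub2 q q' r p)
  from b_sub2.prems(2) have ip: "pinv L \<Psi> p" and iq: "pinv L \<Psi> q" and br: "branges r (concl p) (concl q)" by simp_all
  from b_sub2.IH[OF b_sub2.prems(1) iq] have iq': "pinv L \<Psi> q'" and sc: "sconv L (concl q) (concl q')"
    and xc: "\<forall>M. xconv L \<Psi> (xi q M) (xi q' M)" by auto
  have sl: "samelen (concl q) (concl q')" using sc by (rule sconv_samelen)
  have sp: "samelen (concl p) (concl p)" by (simp add: samelen_def)
  have i1: "pinv L \<Psi> (Binary r p q')" using ip iq' br branges_samelen[OF sp sl] by simp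
  have i2: "sconv L (concl (Binary r p q)) (concl (Binary r p q'))" using bcon_sconv[OF sconv_refl sc] by simp
  have i3: "xconv L \<Psi> (xi (Binary r p q) M) (xi (Binary r p q') M)" for M
  proof -
    define M1 where "M1 = premark (bdesc1 r) (concl p) M"
    define M2 where "M2 = premark (bdesc2 r (concl p)) (concl q) M"
    have pm2: "premark (bdesc2 r (concl p)) (concl q') M = M2" using premark_samelen[OF sl] M2_def by simp
    have x1: "xconv L \<Psi> (xi q M2) (xi q' M2)" using xc by blast
    show ?thesis
    proof (cases "bkind r = Cut \<or> mpos (bkind r) \<in> M")
      case True
      have a: "xconv L \<Psi> (PPlus (PW (unmarked (concl q) M2) (xi p M1)) (PW (unmarked (concl p) M1) (xi q M2)))
                         (PPlus (PW (unmarked (concl q') M2) (xi p M1)) (PW (unmarked (concl p) M1) (xi q M2)))"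
        by (rule xconv_PPlus1[OF xconv_PW_seq[OF unmarked_sconv[OF sc]]])
      have b: "xconv L \<Psi> (PPlus (PW (unmarked (concl q') M2) (xi p M1)) (PW (unmarked (concl p) M1) (xi q M2)))
                         (PPlus (PW (unmarked (concl q') M2) (xi p M1)) (PW (unmarked (concl p) M1) (xi q' M2)))"
        by (rule xconv_PPlus2[OF xconv_PW[OF x1]])
      show ?thesis using conv_trans[OF a b] True pm2 unfolding xi_Binary M1_def[symmetric] M2_def[symmetric] by simp
    next
      case False
      have a: "xconv L \<Psi> (PTimes (binf_of r (concl p) (concl q)) (xi p M1) (xi q M2))
                         (PTimes (binf_of r (concl p) (concl q)) (xi p M1) (xi q' M2))"
        by (rule xconv_PTimes2[OF x1])
      have b: "xconv L \<Psi> (PTimes (binf_of r (concl p) (concl q)) (xi p M1) (xi q' M2))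
                         (PTimes (binf_of r (concl p) (concl q')) (xi p M1) (xi q' M2))"
        by (rule binf_of_xconv[OF sconv_refl sc])
      show ?thesis using conv_trans[OF a b] False pm2 unfolding xi_Binary M1_def[symmetric] M2_def[symmetric] by simp
    qed
  qed
  show ?case using i1 i2 i3 by blast
next
  case (e_seq S S' p)
  have "sconv L S S'" using e_seq.hyps by (rule seq_step_sconv)
  then show ?case using e_seq.prems(2) by simp
next
  case (e_sub p p' S)
  from e_sub.prems(2) have ip: "pinv L \<Psi> p" by simp
  from e_sub.IH[OF e_sub.prems(1) ip] have "pinv L \<Psi> p'" and "\<forall>M. xconv L \<Psi> (xi p M) (xi p' M)" by auto
  then show ?case by simp
qed


lemma inv_start: "is_schema L \<Psi> \<Longrightarrow> pinv L \<Psi> (start_link \<Psi> \<gamma>)"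
proof -
  assume s: "is_schema L \<Psi>"
  then have ne: "\<Psi> \<noteq> []" by (simp add: is_schema_def)
  then have hd: "hd \<Psi> = \<Psi> ! 0" by (simp add: hd_conv_nth)
  have "subst_seq (mk_subst [cn (\<Psi> ! 0)] [num_t \<gamma>]) (cseq (\<Psi> ! 0)) = canon \<Psi> 0 (num_t \<gamma>) (map Fr (cxs (\<Psi> ! 0)))"
    unfolding canon_def
    by (rule subst_seq_cong) (auto simp: mk_subst_Cons mk_subst_Nil1 mk_subst_self)
  then show ?thesis using ne by (simp add: start_link_def hd)
qed

lemma xi_start: "xi (start_link \<Psi> \<gamma>) {} = start_pr \<Psi> \<gamma>"
  by (simp add: start_link_def start_pr_def)

lemma reach: "(pstep L \<Psi>)\<^sup>*\<^sup>* (start_link \<Psi> \<gamma>) P \<Longrightarrow> is_schema L \<Psi> \<Longrightarrow>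
   pinv L \<Psi> P \<and> xconv L \<Psi> (start_pr \<Psi> \<gamma>) (xi P {})"
proof (induction rule: rtranclp_induct)
  case base then show ?case using inv_start xi_start by (metis conv_refl)
next
  case (step y z)
  from step.IH[OF step.prems] have iy: "pinv L \<Psi> y" and cy: "xconv L \<Psi> (start_pr \<Psi> \<gamma>) (xi y {})" by auto
  from sim[OF step.hyps(2) step.prems iy] have "pinv L \<Psi> z" and "xconv L \<Psi> (xi y {}) (xi z {})" by auto
  then show ?case using cy by (auto intro: conv_trans)
qed

section \<open>Normality\<close>

fun dfui :: "uinf \<Rightarrow> bool" where
  "dfui (UInf k as bs m) = ((\<forall>A\<in>set as. dsyms_f A = {}) \<and> (\<forall>A\<in>set bs. dsyms_f A = {}) \<and> dsyms_f m = {})"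
fun dfbi :: "binf \<Rightarrow> bool" where
  "dfbi (BInf k A B m) = (dsyms_f A = {} \<and> dsyms_f B = {} \<and> dsyms_f m = {})"

primrec dfx :: "pterm \<Rightarrow> bool" where
  "dfx (PAx A) = (dsyms_f A = {})"
| "dfx (Pr b M a as) = False"
| "dfx (PUn r X) = (dfui r \<and> dfx X)"
| "dfx (PW S X) = (dsyms_seq S = {} \<and> dfx X)"
| "dfx (PPlus X Y) = (dfx X \<and> dfx Y)"
| "dfx (PTimes r X Y) = (dfbi r \<and> dfx X \<and> dfx Y)"

lemma tstep_dsyms: "tstep L t t' \<Longrightarrow> dsyms_t t \<noteq> {}"
  by (induction rule: tstep.induct) auto

lemma lstep_dsyms: "lstep R xs ys \<Longrightarrow> (\<And>x y. R x y \<Longrightarrow> d x \<noteq> {}) \<Longrightarrow> \<exists>x\<in>set xs. d x \<noteq> {}"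
  unfolding lstep_def by fastforce

lemma fstep_dsyms: "fstep L A A' \<Longrightarrow> dsyms_f A \<noteq> {}"
proof (induction rule: fstep.induct)
  case (arg us us' P)
  then obtain u where "u \<in> set us" "dsyms_t u \<noteq> {}" using lstep_dsyms[of "tstep L" us us' dsyms_t] tstep_dsyms by blast
  then show ?case by auto
qed auto

lemma seq_step_dsyms: "seq_step L S S' \<Longrightarrow> dsyms_seq S \<noteq> {}"
  unfolding seq_step_def dsyms_seq_def
  using lstep_dsyms[of "fstep L" _ _ dsyms_f] fstep_dsyms by fastforce

lemma dfx_normal: "xstep L \<Psi> X Y \<Longrightarrow> dfx X \<Longrightarrow> False"
proof (induction rule: xstep.induct)
  case (un_l as as' k bs m X)
  then show ?case using lstep_dsyms[of "fstep L" as as' dsyms_f] fstep_dsyms by fastforce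
next
  case (un_r bs bs' k as m X)
  then show ?case using lstep_dsyms[of "fstep L" bs bs' dsyms_f] fstep_dsyms by fastforce
qed (auto dest: fstep_dsyms seq_step_dsyms)

lemma set_ctx: "set (ctx G ls) \<subseteq> set G"
  by (simp add: ctx_def set_nths_subset)

lemma concl_dfree: "dfree_p p \<Longrightarrow> dsyms_seq (concl p) = {}"
proof (induction p)
  case (Unary r p)
  obtain k ls rs m where r: "r = URule k ls rs m" by (cases r)
  obtain G D where cp: "concl p = (G, D)" by (cases "concl p")
  have "dsyms_seq (G, D) = {}" using Unary cp by simp
  then have "\<forall>A\<in>set G \<union> set D. dsyms_f A = {}" by (auto simp: dsyms_seq_def)
  moreover have "dsyms_f m = {}" using Unary.prems r by simp
  ultimately show ?case using r cp set_ctx[of G ls] set_ctx[of D rs]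
    by (auto simp: dsyms_seq_def)
next
  case (Binary r p q)
  obtain k i j m where r: "r = BRule k i j m" by (cases r)
  obtain G1 D1 where cp: "concl p = (G1, D1)" by (cases "concl p")
  obtain G2 D2 where cq: "concl q = (G2, D2)" by (cases "concl q")
  have "dsyms_seq (G1, D1) = {}" "dsyms_seq (G2, D2) = {}" using Binary cp cq by simp_all
  then have "\<forall>A\<in>set G1 \<union> set D1 \<union> set G2 \<union> set D2. dsyms_f A = {}" by (auto simp: dsyms_seq_def)
  moreover have "dsyms_f m = {}" using Binary.prems r by simp
  ultimately show ?case using r cp cq set_ctx[of G1 "[i]"] set_ctx[of D1 "[i]"] set_ctx[of G2 "[j]"] set_ctx[of D2 "[j]"]
    by (auto simp: dsyms_seq_def Let_def)
qed (auto simp: dsyms_seq_def)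

lemma unmarked_dfree: "dsyms_seq S = {} \<Longrightarrow> dsyms_seq (unmarked S M) = {}"
  by (auto simp: dsyms_seq_def unmarked_def)

lemma dfx_xi: "nolinks P \<Longrightarrow> dfree_p P \<Longrightarrow> pinv L \<Psi> P \<Longrightarrow> dfx (xi P M)"
proof (induction P arbitrary: M)
  case (Ax A) then show ?case by simp
next
  case (Link b a as S) then show ?case by simp
next
  case (Unary r p)
  have np: "nolinks p" "dfree_p p" "pinv L \<Psi> p" and ur: "uranges r (concl p)" using Unary.prems by simp_all
  have ih: "dfx (xi p M')" for M' using Unary.IH[OF np] .
  obtain k ls rs m where r: "r = URule k ls rs m" by (cases r)
  obtain G D where cp: "concl p = (G, D)" by (cases "concl p")
  have d: "dsyms_seq (G, D) = {}" using concl_dfree[OF np(2)] cp by simp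
  have "dfui (uinf_of r (concl p))"
  proof -
    have "\<forall>i\<in>set ls. i < length G" "\<forall>i\<in>set rs. i < length D" using ur r cp by simp_all
    moreover have "dsyms_f m = {}" using Unary.prems r by simp
    ultimately show ?thesis using d r cp by (auto simp: dsyms_seq_def)
  qed
  then show ?case using ih unfolding xi_Unary by simp
next
  case (Binary r p q)
  have np: "nolinks p" "dfree_p p" "pinv L \<Psi> p" and nq: "nolinks q" "dfree_p q" "pinv L \<Psi> q"
    and br: "branges r (concl p) (concl q)" using Binary.prems by simp_all
  have ihp: "dfx (xi p M')" for M' using Binary.IH(1)[OF np] .
  have ihq: "dfx (xi q M')" for M' using Binary.IH(2)[OF nq] .
  have dp: "dsyms_seq (concl p) = {}" using concl_dfree[OF np(2)] .
  have dq: "dsyms_seq (concl q) = {}" using concl_dfree[OF nq(2)] .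
  obtain k i j m where r: "r = BRule k i j m" by (cases r)
  obtain G1 D1 where cp: "concl p = (G1, D1)" by (cases "concl p")
  obtain G2 D2 where cq: "concl q = (G2, D2)" by (cases "concl q")
  have "dfbi (binf_of r (concl p) (concl q))"
  proof -
    have "i < length (if a1_left k then G1 else D1)" "j < length (if a2_left k then G2 else D2)"
      using br r cp cq by simp_all
    moreover have "dsyms_f m = {}" using Binary.prems r by simp
    ultimately show ?thesis using dp dq r cp cq by (auto simp: dsyms_seq_def)
  qed
  then show ?case using ihp ihq unmarked_dfree[OF dp] unmarked_dfree[OF dq] unfolding xi_Binary by simp
next
  case (ERule S p) then show ?case by simp
qed

lemma nopr_xi: "nolinks P \<Longrightarrow> nopr (xi P M)"
  by (induction P arbitrary: M) (simp_all add: Let_def)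

theorem mainTheorem11:
  fixes L :: lang and \<Psi> :: schema and \<gamma> :: nat and P :: lkproof and X :: pterm
  assumes "is_schema L \<Psi>"
    and "schema_eval L \<Psi> \<gamma> P"
    and "proj_eval L \<Psi> \<gamma> X"
  shows "PR P = evalp X"
proof -
  have wf: "wf_lang L" using assms(1) by (rule wf_of_schema)
  from assms(2) have r: "(pstep L \<Psi>)\<^sup>*\<^sup>* (start_link \<Psi> \<gamma>) P" and n: "nolinks P" "dfree_p P"
    by (auto simp: schema_eval_def normal_proof_def)
  from reach[OF r assms(1)] have i: "pinv L \<Psi> P" and c: "xconv L \<Psi> (start_pr \<Psi> \<gamma>) (xi P {})" by auto
  from assms(3) have rx: "(xstep L \<Psi>)\<^sup>*\<^sup>* (start_pr \<Psi> \<gamma>) X" and nx: "\<not> (\<exists>Y. xstep L \<Psi> X Y)"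
    by (auto simp: proj_eval_def)
  have cx: "xconv L \<Psi> X (xi P {})" using conv_sym[OF rtranclp_conv[OF rx]] c by (rule conv_trans)
  have d: "dfx (xi P {})" using dfx_xi[OF n i] .
  have nxi: "\<not> (\<exists>Y. xstep L \<Psi> (xi P {}) Y)" using dfx_normal d by blast
  have "X = xi P {}" using normal_unique[OF wf cx nx nxi] .
  then show ?thesis by (simp add: PR_def)
qed

end
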